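(* Let $n\ge p$, $\mathcal X\in\mathrm{St}(n,p,l)$, $\mathcal U,\mathcal V\in T_{\mathcal X}\mathrm{St}(n,p,l)$, and let $R_{\mathcal X}(\mathcal U)=qf(\mathcal X+\mathcal U)$ be the t-QR based retraction. Put $\mathcal Q=R_{\mathcal X}(\mathcal U)$, $\mathcal C=\mathcal V*(\mathcal Q^\top*(\mathcal X+\mathcal U))^{-1}$, $\mathcal B=\mathcal Q^\top*\mathcal C$, and $\hat B^{(i)}=(L(\mathcal B))^{(i)}$. Then the vector transport by differentiated retraction $\mathcal T_{\mathcal U}\mathcal V:=\frac{d}{dt}R_{\mathcal X}(\mathcal U+t\mathcal V)\big|_{t=0}$ equals $$\mathcal T_{\mathcal U}\mathcal V=\mathcal Q*L^{-1}\Big(\text{the tensor with frontal slices }\mathbf P_{\mathrm{skew}}(\hat B^{(i)}),\ i=1,\dots,l\Big)+(\mathcal I-\mathcal Q*\mathcal Q^\top)*\mathcal C,$$ where for a complex $p\times p$ matrix $B$, $\mathbf P_{\mathrm{skew}}(B)$ is the skew-Hermitian matrix $S$ such that $B-S$ is upper triangular with real diagonal; explicitly $S_{mn}=B_{mn}$ for $m>n$, $S_{mm}=\mathrm i\,\operatorname{Im}(B_{mm})$, and $S_{mn}=-\overline{B_{nm}}$ for $m<n$.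
   Context: Frontal slices $A^{(i)}=\mathcal A(:,:,i)$. The t-product is $\mathcal A*\mathcal B=\operatorname{fold}(\operatorname{bcirc}(\mathcal A)\operatorname{unfold}(\mathcal B))$, where $\operatorname{bcirc}(\mathcal A)$ is the block circulant matrix with $(i,j)$ block $A^{(((i-j)\bmod l)+1)}$, $\operatorname{unfold}$ stacks frontal slices vertically, $\operatorname{fold}$ is its inverse. Transpose: $\mathcal A^\top$ has frontal slices $(A^{(1)})^\top,(A^{(l)})^\top,\dots,(A^{(2)})^\top$. $\mathcal I$ identity tensor; $\mathcal A^{-1}$ the t-product inverse. The DFT $L(\mathcal A)=\hat{\mathcal A}$ has frontal slices $\hat A^{(k)}=\sum_{j=1}^l\omega^{(k-1)(j-1)}A^{(j)}$, $\omega=e^{-2\pi\mathrm i/l}$, $L^{-1}$ its inverse; $\mathcal C=\mathcal A*\mathcal B$ iff $\hat C^{(k)}=\hat A^{(k)}\hat B^{(k)}$. $\mathrm{St}(n,p,l)=\{\mathcal X\in\mathbb R^{n\times p\times l}:\mathcal X^\top*\mathcal X=\mathcal I\}$. For $\mathcal A$ whose DFT slices all have full column rank $p$, $qf(\mathcal A)$ is the factor $\mathcal Q\in\mathrm{St}(n,p,l)$ of the unique t-QR decomposition $\mathcal A=\mathcal Q*\mathcal R$ in which the DFT slices of $\mathcal R$ are upper triangular with real strictly positive diagonal. *)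

theory Defs
  imports Complex_Main "Jordan_Normal_Form.Matrix"
begin

text \<open>Third-order tensors of size n x p x l are represented as lists of l frontal
slices (JNF matrices); slice index k (0-based) corresponds to A^(k+1) in the paper.\<close>

type_synonym 'a tensor = "'a mat list"

definition is_tensor :: "nat \<Rightarrow> nat \<Rightarrow> nat \<Rightarrow> 'a tensor \<Rightarrow> bool" where
  "is_tensor n p l A \<longleftrightarrow> length A = l \<and> (\<forall>k<l. A ! k \<in> carrier_mat n p)"

definition trows :: "'a tensor \<Rightarrow> nat" where "trows A = dim_row (hd A)"
definition tcols :: "'a tensor \<Rightarrow> nat" where "tcols A = dim_col (hd A)"

definition bcirc :: "'a tensor \<Rightarrow> 'a mat" where
  "bcirc A = (let n = trows A; p = tcols A; l = length A in
     mat (n * l) (p * l) (\<lambda>(r, c). (A ! ((r div n + l - c div p) mod l)) $$ (r mod n, c mod p)))"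

definition tunfold :: "'a tensor \<Rightarrow> 'a mat" where
  "tunfold B = (let p = trows B; q = tcols B; l = length B in
     mat (p * l) q (\<lambda>(r, c). (B ! (r div p)) $$ (r mod p, c)))"

definition tfold :: "nat \<Rightarrow> nat \<Rightarrow> 'a mat \<Rightarrow> 'a tensor" where
  "tfold n l M = map (\<lambda>k. mat n (dim_col M) (\<lambda>(i, j). M $$ (k * n + i, j))) [0..<l]"

definition tprod :: "'a::comm_ring_1 tensor \<Rightarrow> 'a tensor \<Rightarrow> 'a tensor" (infixl "\<star>" 70) where
  "A \<star> B = tfold (trows A) (length A) (bcirc A * tunfold B)"

definition ttrans :: "'a tensor \<Rightarrow> 'a tensor" where
  "ttrans A = (let l = length A in map (\<lambda>k. transpose_mat (A ! ((l - k) mod l))) [0..<l])"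

definition tid :: "nat \<Rightarrow> nat \<Rightarrow> 'a::{zero,one} tensor" where
  "tid n l = map (\<lambda>k. if k = 0 then 1\<^sub>m n else 0\<^sub>m n n) [0..<l]"

definition tadd :: "'a::plus tensor \<Rightarrow> 'a tensor \<Rightarrow> 'a tensor" (infixl "\<oplus>\<^sub>t" 65) where
  "A \<oplus>\<^sub>t B = map2 (+) A B"

definition tminus :: "'a::minus tensor \<Rightarrow> 'a tensor \<Rightarrow> 'a tensor" (infixl "\<ominus>\<^sub>t" 65) where
  "A \<ominus>\<^sub>t B = map2 (-) A B"

definition tsmult :: "'a::times \<Rightarrow> 'a tensor \<Rightarrow> 'a tensor" where
  "tsmult c A = map (\<lambda>M. c \<cdot>\<^sub>m M) A"

definition tinv :: "'a::comm_ring_1 tensor \<Rightarrow> 'a tensor" where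
  "tinv A = (THE B. is_tensor (trows A) (trows A) (length A) B \<and>
      A \<star> B = tid (trows A) (length A) \<and> B \<star> A = tid (trows A) (length A))"

definition cten :: "real tensor \<Rightarrow> complex tensor" where
  "cten A = map (map_mat complex_of_real) A"

definition dft_omega :: "nat \<Rightarrow> complex" where
  "dft_omega l = exp (- 2 * pi * \<i> / of_nat l)"

definition tdft :: "complex tensor \<Rightarrow> complex tensor" where
  "tdft A = (let l = length A; n = trows A; p = tcols A in
     map (\<lambda>k. mat n p (\<lambda>(i, c). \<Sum>j<l. dft_omega l ^ (k * j) * (A ! j) $$ (i, c))) [0..<l])"

definition tidft :: "complex tensor \<Rightarrow> complex tensor" where
  "tidft A = (let l = length A; n = trows A; p = tcols A in
     map (\<lambda>j. mat n p (\<lambda>(i, c). (1 / of_nat l) *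
        (\<Sum>k<l. inverse (dft_omega l) ^ (k * j) * (A ! k) $$ (i, c)))) [0..<l])"

definition Stiefel :: "nat \<Rightarrow> nat \<Rightarrow> nat \<Rightarrow> real tensor set" where
  "Stiefel n p l = {X. is_tensor n p l X \<and> ttrans X \<star> X = tid p l}"

definition tangent_St :: "nat \<Rightarrow> nat \<Rightarrow> nat \<Rightarrow> real tensor \<Rightarrow> real tensor set" where
  "tangent_St n p l X = {Z. is_tensor n p l Z \<and> (ttrans X \<star> Z) \<oplus>\<^sub>t (ttrans Z \<star> X) = replicate l (0\<^sub>m p p)}"

definition qf :: "real tensor \<Rightarrow> real tensor" where
  "qf A = (let n = trows A; p = tcols A; l = length A in
     THE Q. Q \<in> Stiefel n p l \<and>
       (\<exists>R. is_tensor p p l R \<and> A = Q \<star> R \<and>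
          (\<forall>k<l. upper_triangular (tdft (cten R) ! k) \<and>
             (\<forall>i<p. Im ((tdft (cten R) ! k) $$ (i, i)) = 0 \<and> Re ((tdft (cten R) ! k) $$ (i, i)) > 0))))"

definition Pskew :: "complex mat \<Rightarrow> complex mat" where
  "Pskew B = mat (dim_row B) (dim_col B) (\<lambda>(m, c).
     if m > c then B $$ (m, c)
     else if m = c then \<i> * complex_of_real (Im (B $$ (m, m)))
     else - cnj (B $$ (c, m)))"

definition tensor_has_deriv_at0 :: "nat \<Rightarrow> nat \<Rightarrow> nat \<Rightarrow> (real \<Rightarrow> real tensor) \<Rightarrow> real tensor \<Rightarrow> bool" where
  "tensor_has_deriv_at0 n p l f D \<longleftrightarrow> is_tensor n p l D \<and>
     (\<forall>\<^sub>F t in nhds 0. is_tensor n p l (f t)) \<and>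
     (\<forall>k<l. \<forall>i<n. \<forall>j<p. ((\<lambda>t. (f t ! k) $$ (i, j)) has_real_derivative (D ! k) $$ (i, j)) (at 0))"

end

theory Submission
  imports Defs "Jordan_Normal_Form.Determinant"
begin


lemma sum_split_mult:
  "(\<Sum>x<s*l. f x) = (\<Sum>m<l. \<Sum>q<s. f (m*s+q :: nat))"
proof (induction l)
  case 0 then show ?case by simp
next
  case (Suc l)
  have "{..<s * Suc l} = {..<s*l} \<union> {s*l..<s*l+s}" by auto
  then have "(\<Sum>x<s*Suc l. f x) = (\<Sum>x<s*l. f x) + (\<Sum>x\<in>{s*l..<s*l+s}. f x)"
    by (simp add: sum.union_disjoint ivl_disj_int)
  also have "(\<Sum>x\<in>{s*l..<s*l+s}. f x) = (\<Sum>q<s. f (l*s+q))"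
  proof -
    have "(\<Sum>x\<in>{s*l..<s*l+s}. f x) = (\<Sum>q\<in>{0..<s}. f (q + s*l))"
      using sum.shift_bounds_nat_ivl[of f 0 "s*l" s] by (simp add: add.commute)
    then show ?thesis by (simp add: lessThan_atLeast0 mult.commute add.commute)
  qed
  finally show ?case using Suc by simp
qed

lemma tensorD: "is_tensor n p l A \<Longrightarrow> k < l \<Longrightarrow> A ! k \<in> carrier_mat n p"
  by (simp add: is_tensor_def)
lemma tensor_len: "is_tensor n p l A \<Longrightarrow> length A = l"
  by (simp add: is_tensor_def)
lemma tensor_trows: "is_tensor n p l A \<Longrightarrow> 0 < l \<Longrightarrow> trows A = n"
  by (cases A) (auto simp: is_tensor_def trows_def)
lemma tensor_tcols: "is_tensor n p l A \<Longrightarrow> 0 < l \<Longrightarrow> tcols A = p"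
  by (cases A) (auto simp: is_tensor_def tcols_def)

lemma tensor_eqI:
  assumes "is_tensor n p l A" "is_tensor n p l B"
    and "\<And>k i j. k < l \<Longrightarrow> i < n \<Longrightarrow> j < p \<Longrightarrow> A ! k $$ (i,j) = B ! k $$ (i,j)"
  shows "A = B"
proof (rule nth_equalityI)
  show "length A = length B" using assms by (simp add: is_tensor_def)
  fix k assume "k < length A"
  then have k: "k < l" using assms by (simp add: is_tensor_def)
  show "A ! k = B ! k"
    by (rule eq_matI) (use assms k tensorD[OF assms(1) k] tensorD[OF assms(2) k] in auto)
qed

lemma tprod_tensor_entry:
  fixes A B :: "'a::comm_ring_1 tensor"
  assumes A: "is_tensor r s l A" and B: "is_tensor s c l B" and l: "0 < l"
  shows "is_tensor r c l (A \<star> B)"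
    and "\<And>k i j. k < l \<Longrightarrow> i < r \<Longrightarrow> j < c \<Longrightarrow> (A \<star> B) ! k $$ (i,j) =
           (\<Sum>m<l. \<Sum>q<s. A ! ((k + l - m) mod l) $$ (i,q) * B ! m $$ (q,j))"
proof -
  have tA: "trows A = r" "tcols A = s" "length A = l"
    using tensor_trows[OF A l] tensor_tcols[OF A l] tensor_len[OF A] by auto
  have tB: "trows B = s" "tcols B = c" "length B = l"
    using tensor_trows[OF B l] tensor_tcols[OF B l] tensor_len[OF B] by auto
  have bc: "bcirc A \<in> carrier_mat (r*l) (s*l)" by (simp add: bcirc_def tA Let_def)
  have tu: "tunfold B \<in> carrier_mat (s*l) c" by (simp add: tunfold_def tB Let_def)
  have P: "A \<star> B = tfold r l (bcirc A * tunfold B)" by (simp add: tprod_def tA)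
  show "is_tensor r c l (A \<star> B)" unfolding P is_tensor_def tfold_def using bc tu by auto
  fix k i j assume k: "k < l" and i: "i < r" and j: "j < c"
  have ki: "k*r+i < r*l"
  proof -
    have "k*r + i < k*r + r" using i by simp
    also have "\<dots> = (Suc k) * r" by simp
    also have "\<dots> \<le> l * r" using k by (intro mult_right_mono) auto
    finally show ?thesis by (simp add: mult.commute)
  qed
  have "(A \<star> B) ! k $$ (i,j) = (bcirc A * tunfold B) $$ (k*r+i, j)"
    unfolding P tfold_def using k i j bc tu by simp
  also have "\<dots> = (\<Sum>x<s*l. bcirc A $$ (k*r+i, x) * tunfold B $$ (x, j))"
    using bc tu ki j by (simp add: scalar_prod_def lessThan_atLeast0)
  also have "\<dots> = (\<Sum>m<l. \<Sum>q<s. bcirc A $$ (k*r+i, m*s+q) * tunfold B $$ (m*s+q, j))"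
    by (rule sum_split_mult)
  also have "\<dots> = (\<Sum>m<l. \<Sum>q<s. A ! ((k + l - m) mod l) $$ (i,q) * B ! m $$ (q,j))"
  proof (intro sum.cong refl)
    fix m q assume m: "m \<in> {..<l}" and q: "q \<in> {..<s}"
    have mq: "m*s+q < s*l"
    proof -
      have "m*s + q < m*s + s" using q by simp
      also have "\<dots> = (Suc m) * s" by simp
      also have "\<dots> \<le> l * s" using m by (intro mult_right_mono) auto
      finally show ?thesis by (simp add: mult.commute)
    qed
    have d1: "(k*r+i) div r = k" "(k*r+i) mod r = i" using i by auto
    have d2: "(m*s+q) div s = m" "(m*s+q) mod s = q" using q by auto
    show "bcirc A $$ (k*r+i, m*s+q) * tunfold B $$ (m*s+q, j) = A ! ((k + l - m) mod l) $$ (i,q) * B ! m $$ (q,j)"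
      using ki mq j i q by (simp add: bcirc_def tunfold_def tA tB Let_def d1 d2)
  qed
  finally show "(A \<star> B) ! k $$ (i,j) = (\<Sum>m<l. \<Sum>q<s. A ! ((k + l - m) mod l) $$ (i,q) * B ! m $$ (q,j))" .
qed

section \<open>Roots of unity\<close>

lemma om_cis: "dft_omega l = cis (- 2 * pi / real l)"
  by (simp add: dft_omega_def cis_conv_exp field_simps)

lemma om_pow_l: "0 < l \<Longrightarrow> dft_omega l ^ l = 1"
  by (simp add: om_cis DeMoivre complex_eq_iff)

lemma om_nz: "dft_omega l \<noteq> 0"
  by (simp add: om_cis)

lemma om_cnj: "cnj (dft_omega l) = inverse (dft_omega l)"
  by (simp add: om_cis cis_cnj cis_inverse)

lemma om_pow_mod: "0 < l \<Longrightarrow> dft_omega l ^ a = dft_omega l ^ (a mod l)"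
proof -
  assume l: "0 < l"
  have "dft_omega l ^ a = dft_omega l ^ (l * (a div l) + a mod l)" by simp
  also have "\<dots> = dft_omega l ^ (l * (a div l)) * dft_omega l ^ (a mod l)"
    by (rule power_add)
  also have "\<dots> = (dft_omega l ^ l) ^ (a div l) * dft_omega l ^ (a mod l)"
    by (simp only: power_mult)
  finally show ?thesis using om_pow_l[OF l] by simp
qed

lemma om_pow_cong: "0 < l \<Longrightarrow> a mod l = b mod l \<Longrightarrow> dft_omega l ^ a = dft_omega l ^ b"
  using om_pow_mod by metis

lemma om_pow_ne1: assumes "0 < d" "d < l" shows "dft_omega l ^ d \<noteq> 1"
proof
  assume "dft_omega l ^ d = 1"
  then have "cis (real d * (- 2 * pi / real l)) = 1" by (simp add: om_cis DeMoivre)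
  then have "cos (real d * (- 2 * pi / real l)) = 1" by (metis cis.sel(1) one_complex.sel(1))
  then obtain x :: int where x: "real d * (- 2 * pi / real l) = real_of_int x * 2 * pi"
    using cos_one_2pi_int by blast
  have l0: "real l > 0" using assms by simp
  from x have "- (pi * real d) = pi * (real_of_int x * real l)" using l0 by (simp add: field_simps)
  then have "pi * (- real d) = pi * (real_of_int x * real l)" by simp
  then have "- real d = real_of_int x * real l" using pi_neq_zero by (simp only: mult_cancel_left) simp
  then have "- int d = x * int l" by (metis of_int_eq_iff of_int_minus of_int_mult of_int_of_nat_eq)
  moreover have "0 < int d" "int d < int l" using assms by auto
  ultimately show False
  proof (cases "x < 0")
    case True
    then have "x \<le> -1" by simp
    then have "x * int l \<le> -1 * int l" by (intro mult_right_mono) auto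
    then show False using \<open>- int d = x * int l\<close> \<open>int d < int l\<close> by linarith
  next
    case False
    then have "0 \<le> x * int l" by simp
    then show False using \<open>- int d = x * int l\<close> \<open>0 < int d\<close> by linarith
  qed
qed

lemma om_orth:
  assumes l: "0 < l" and a: "a < l" and b: "b < l"
  shows "(\<Sum>k<l. inverse (dft_omega l) ^ (k*b) * dft_omega l ^ (k*a)) = (if a = b then of_nat l else 0)"
proof -
  let ?w = "dft_omega l"
  define z where "z = inverse ?w ^ b * ?w ^ a"
  have eq: "inverse ?w ^ (k*b) * ?w ^ (k*a) = z ^ k" for k
    by (simp add: z_def power_mult_distrib power_mult mult.commute)
  have zl: "z ^ l = 1"
    unfolding z_def power_mult_distrib
    by (simp add: power_mult[symmetric] mult.commute[of _ l] power_mult om_pow_l[OF l] power_inverse)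
  have z1: "z = 1 \<longleftrightarrow> a = b"
  proof
    assume z: "z = 1"
    show "a = b"
    proof (rule ccontr)
      assume ab: "a \<noteq> b"
      have eqw: "?w ^ a = ?w ^ b" using z om_nz[of l] by (simp add: z_def field_simps power_inverse)
      show False
      proof (cases "a < b")
        case True
        have "?w ^ b = ?w ^ a * ?w ^ (b - a)" using True by (simp add: power_add[symmetric])
        then have "?w ^ (b - a) = 1" using eqw om_nz[of l] by simp
        then show False using om_pow_ne1[of "b-a" l] True b by simp
      next
        case False
        then have "b < a" using ab by simp
        have "?w ^ a = ?w ^ b * ?w ^ (a - b)" using \<open>b < a\<close> by (simp add: power_add[symmetric])
        then have "?w ^ (a - b) = 1" using eqw om_nz[of l] by simp
        then show False using om_pow_ne1[of "a-b" l] \<open>b < a\<close> a by simp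
      qed
    qed
  next
    assume "a = b" then show "z = 1" using om_nz[of l] by (simp add: z_def power_inverse)
  qed
  show ?thesis unfolding eq using sum_gp_strict[of z l] zl z1 by auto
qed

lemma om_orth2:
  assumes l: "0 < l" and a: "a < l" and b: "b < l"
  shows "(\<Sum>k<l. dft_omega l ^ (a*k) * inverse (dft_omega l) ^ (b*k)) = (if a = b then of_nat l else 0)"
  using om_orth[OF l a b] by (simp add: mult.commute)

section \<open>DFT\<close>

lemma tdft_tensor:
  assumes A: "is_tensor r c l A" and l: "0 < l"
  shows "is_tensor r c l (tdft A)"
    and "\<And>k i j. k < l \<Longrightarrow> i < r \<Longrightarrow> j < c \<Longrightarrow>
          tdft A ! k $$ (i,j) = (\<Sum>m<l. dft_omega l ^ (k*m) * A ! m $$ (i,j))"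
  using tensor_trows[OF A l] tensor_tcols[OF A l] tensor_len[OF A]
  by (auto simp: tdft_def is_tensor_def Let_def)

lemma tidft_tensor:
  assumes A: "is_tensor r c l A" and l: "0 < l"
  shows "is_tensor r c l (tidft A)"
    and "\<And>k i j. k < l \<Longrightarrow> i < r \<Longrightarrow> j < c \<Longrightarrow>
          tidft A ! k $$ (i,j) = (1 / of_nat l) * (\<Sum>m<l. inverse (dft_omega l) ^ (m*k) * A ! m $$ (i,j))"
  using tensor_trows[OF A l] tensor_tcols[OF A l] tensor_len[OF A]
  by (auto simp: tidft_def is_tensor_def Let_def)

lemma sum_delta_mult:
  fixes f :: "nat \<Rightarrow> 'a::semiring_0"
  assumes "k < l"
  shows "(\<Sum>m'<l. f m' * (if m' = k then c else 0)) = f k * c"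
    and "(\<Sum>m'<l. f m' * (if k = m' then c else 0)) = f k * c"
proof -
  have "(\<Sum>m'<l. f m' * (if m' = k then c else 0)) = (\<Sum>m'<l. if m' = k then f m' * c else 0)"
    by (intro sum.cong) auto
  then show "(\<Sum>m'<l. f m' * (if m' = k then c else 0)) = f k * c" using assms by simp
  have "(\<Sum>m'<l. f m' * (if k = m' then c else 0)) = (\<Sum>m'<l. if m' = k then f m' * c else 0)"
    by (intro sum.cong) auto
  then show "(\<Sum>m'<l. f m' * (if k = m' then c else 0)) = f k * c" using assms by simp
qed

lemma sum_pull_const:
  fixes f :: "'i \<Rightarrow> 'a::comm_semiring_0"
  shows "(\<Sum>m\<in>A. f m * (c * g m)) = c * (\<Sum>m\<in>A. f m * g m)"
  by (simp add: sum_distrib_left mult.left_commute)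

lemma sum_swap_mult:
  fixes f :: "'i \<Rightarrow> 'a::comm_semiring_0"
  shows "(\<Sum>m\<in>A. f m * (\<Sum>m'\<in>B. g m m' * a m')) = (\<Sum>m'\<in>B. a m' * (\<Sum>m\<in>A. f m * g m m'))"
proof -
  have "(\<Sum>m\<in>A. f m * (\<Sum>m'\<in>B. g m m' * a m')) = (\<Sum>m\<in>A. \<Sum>m'\<in>B. f m * g m m' * a m')"
    by (simp add: sum_distrib_left mult.assoc)
  also have "\<dots> = (\<Sum>m'\<in>B. \<Sum>m\<in>A. f m * g m m' * a m')" by (rule sum.swap)
  also have "\<dots> = (\<Sum>m'\<in>B. a m' * (\<Sum>m\<in>A. f m * g m m'))" by (simp add: sum_distrib_left mult_ac)
  finally show ?thesis .
qed

lemma tidft_tdft: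
  assumes A: "is_tensor r c l A" and l: "0 < l"
  shows "tidft (tdft A) = A"
proof (rule tensor_eqI[OF tidft_tensor(1)[OF tdft_tensor(1)[OF A l] l] A])
  fix k i j assume k: "k < l" and i: "i < r" and j: "j < c"
  have "tidft (tdft A) ! k $$ (i,j) = (1 / of_nat l) *
     (\<Sum>m<l. inverse (dft_omega l) ^ (m*k) * (\<Sum>m'<l. dft_omega l ^ (m*m') * A ! m' $$ (i,j)))"
    using tidft_tensor(2)[OF tdft_tensor(1)[OF A l] l k i j] tdft_tensor(2)[OF A l _ i j]
    by simp
  also have "\<dots> = (1 / of_nat l) * (\<Sum>m'<l. A ! m' $$ (i,j) *
       (\<Sum>m<l. inverse (dft_omega l) ^ (m*k) * dft_omega l ^ (m*m')))"
    by (simp only: sum_swap_mult)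
  also have "\<dots> = (1 / of_nat l) * (\<Sum>m'<l. A ! m' $$ (i,j) * (if m' = k then of_nat l else 0))"
    by (intro arg_cong[where f="\<lambda>x. _ * x"] sum.cong refl) (simp add: om_orth[OF l _ k])
  also have "\<dots> = A ! k $$ (i,j)" using k l by (simp add: sum_delta_mult)
  finally show "tidft (tdft A) ! k $$ (i,j) = A ! k $$ (i,j)" .
qed

lemma tdft_tidft:
  assumes A: "is_tensor r c l A" and l: "0 < l"
  shows "tdft (tidft A) = A"
proof (rule tensor_eqI[OF tdft_tensor(1)[OF tidft_tensor(1)[OF A l] l] A])
  fix k i j assume k: "k < l" and i: "i < r" and j: "j < c"
  have "tdft (tidft A) ! k $$ (i,j) =
     (\<Sum>m<l. dft_omega l ^ (k*m) * ((1 / of_nat l) * (\<Sum>m'<l. inverse (dft_omega l) ^ (m'*m) * A ! m' $$ (i,j))))"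
    using tdft_tensor(2)[OF tidft_tensor(1)[OF A l] l k i j] tidft_tensor(2)[OF A l _ i j]
    by simp
  also have "\<dots> = (1 / of_nat l) * (\<Sum>m<l. dft_omega l ^ (k*m) * (\<Sum>m'<l. inverse (dft_omega l) ^ (m'*m) * A ! m' $$ (i,j)))"
    by (rule sum_pull_const)
  also have "\<dots> = (1 / of_nat l) * (\<Sum>m'<l. A ! m' $$ (i,j) *
       (\<Sum>m<l. dft_omega l ^ (k*m) * inverse (dft_omega l) ^ (m'*m)))"
    by (simp only: sum_swap_mult)
  also have "\<dots> = (1 / of_nat l) * (\<Sum>m'<l. A ! m' $$ (i,j) * (if k = m' then of_nat l else 0))"
    by (intro arg_cong[where f="\<lambda>x. _ * x"] sum.cong refl) (simp add: om_orth2[OF l k])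
  also have "\<dots> = A ! k $$ (i,j)" using k l by (simp add: sum_delta_mult)
  finally show "tdft (tidft A) ! k $$ (i,j) = A ! k $$ (i,j)" .
qed

lemma mod_shift1: fixes m l k' :: nat shows "m \<le> l \<Longrightarrow> k' < l \<Longrightarrow> ((k' + l - m) mod l + m) mod l = k'"
proof -
  assume m: "m \<le> l" and k: "k' < l"
  have "((k' + l - m) mod l + m) mod l = (k' + l - m + m) mod l" by (rule mod_add_left_eq)
  also have "k' + l - m + m = k' + l" using m by simp
  finally show ?thesis using k by simp
qed

lemma mod_shift2: fixes m l a :: nat shows "m \<le> l \<Longrightarrow> a < l \<Longrightarrow> ((a + m) mod l + l - m) mod l = a"
proof -
  assume m: "m \<le> l" and a: "a < l"
  have "(a + m) mod l + l - m = (a + m) mod l + (l - m)" using m by arith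
  then have "((a + m) mod l + l - m) mod l = ((a + m) + (l - m)) mod l" by (simp add: mod_add_left_eq)
  also have "(a + m) + (l - m) = a + l" using m by simp
  finally show ?thesis using a by simp
qed

lemma dft_reindex:
  fixes f :: "nat \<Rightarrow> complex"
  assumes l: "0 < l" and m: "m < l"
  shows "(\<Sum>k'<l. dft_omega l ^ (k*k') * f ((k' + l - m) mod l)) =
         dft_omega l ^ (k*m) * (\<Sum>a<l. dft_omega l ^ (k*a) * f a)"
proof -
  have "(\<Sum>k'<l. dft_omega l ^ (k*k') * f ((k' + l - m) mod l)) =
        (\<Sum>a<l. dft_omega l ^ (k*m) * (dft_omega l ^ (k*a) * f a))"
  proof (rule sum.reindex_bij_witness[where j="\<lambda>k'. (k' + l - m) mod l" and i="\<lambda>a. (a + m) mod l"])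
    fix a assume "a \<in> {..<l}"
    then show "((a + l - m) mod l + m) mod l = a" using mod_shift1[of m l a] m by simp
    show "(a + l - m) mod l \<in> {..<l}" using l by simp
  next
    fix b assume "b \<in> {..<l}"
    then show "((b + m) mod l + l - m) mod l = b" using mod_shift2[of m l b] m by simp
    show "(b + m) mod l \<in> {..<l}" using l by simp
  next
    fix a assume a: "a \<in> {..<l}"
    have "dft_omega l ^ (m + (a + l - m) mod l) = dft_omega l ^ a"
      by (rule om_pow_cong[OF l]) (use mod_shift1[of m l a] m a in \<open>simp add: add.commute\<close>)
    then have "dft_omega l ^ (k*m) * dft_omega l ^ (k * ((a + l - m) mod l)) = dft_omega l ^ (k*a)"
      by (metis power_add power_mult mult.commute)
    then show "dft_omega l ^ (k*m) * (dft_omega l ^ (k * ((a + l - m) mod l)) * f ((a + l - m) mod l)) =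
      dft_omega l ^ (k*a) * f ((a + l - m) mod l)"
      by (metis mult.assoc)
  qed
  also have "\<dots> = dft_omega l ^ (k*m) * (\<Sum>a<l. dft_omega l ^ (k*a) * f a)"
    by (simp add: sum_distrib_left)
  finally show ?thesis .
qed

lemma mat_mult_entry:
  "A \<in> carrier_mat r s \<Longrightarrow> B \<in> carrier_mat s c \<Longrightarrow> i < r \<Longrightarrow> j < c \<Longrightarrow>
   (A * B) $$ (i,j) = (\<Sum>q<s. A $$ (i,q) * B $$ (q,j))"
  by (simp add: scalar_prod_def lessThan_atLeast0)

lemma tdft_tprod:
  fixes A B :: "complex tensor"
  assumes A: "is_tensor r s l A" and B: "is_tensor s c l B" and l: "0 < l" and k: "k < l"
  shows "tdft (A \<star> B) ! k = tdft A ! k * tdft B ! k"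
proof -
  note AB = tprod_tensor_entry[OF A B l]
  have c1: "tdft (A \<star> B) ! k \<in> carrier_mat r c" using tensorD[OF tdft_tensor(1)[OF AB(1) l] k] .
  have cA: "tdft A ! k \<in> carrier_mat r s" using tensorD[OF tdft_tensor(1)[OF A l] k] .
  have cB: "tdft B ! k \<in> carrier_mat s c" using tensorD[OF tdft_tensor(1)[OF B l] k] .
  show ?thesis
  proof (rule eq_matI)
    fix i j assume i: "i < dim_row (tdft A ! k * tdft B ! k)" and j: "j < dim_col (tdft A ! k * tdft B ! k)"
    then have i: "i < r" and j: "j < c" using cA cB by auto
    have "tdft (A \<star> B) ! k $$ (i,j) = (\<Sum>k'<l. dft_omega l ^ (k*k') *
        (\<Sum>m<l. \<Sum>q<s. A ! ((k' + l - m) mod l) $$ (i,q) * B ! m $$ (q,j)))"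
      using tdft_tensor(2)[OF AB(1) l k i j] AB(2)[OF _ i j] by simp
    also have "\<dots> = (\<Sum>m<l. \<Sum>q<s. B ! m $$ (q,j) *
        (\<Sum>k'<l. dft_omega l ^ (k*k') * A ! ((k' + l - m) mod l) $$ (i,q)))"
    proof -
      have "(\<Sum>k'<l. dft_omega l ^ (k*k') *
          (\<Sum>m<l. \<Sum>q<s. A ! ((k' + l - m) mod l) $$ (i,q) * B ! m $$ (q,j))) =
          (\<Sum>k'<l. \<Sum>m<l. \<Sum>q<s. B ! m $$ (q,j) * (dft_omega l ^ (k*k') * A ! ((k' + l - m) mod l) $$ (i,q)))"
        by (simp add: sum_distrib_left mult_ac)
      also have "\<dots> = (\<Sum>m<l. \<Sum>k'<l. \<Sum>q<s. B ! m $$ (q,j) * (dft_omega l ^ (k*k') * A ! ((k' + l - m) mod l) $$ (i,q)))"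
        by (rule sum.swap)
      also have "\<dots> = (\<Sum>m<l. \<Sum>q<s. \<Sum>k'<l. B ! m $$ (q,j) * (dft_omega l ^ (k*k') * A ! ((k' + l - m) mod l) $$ (i,q)))"
        by (intro sum.cong refl sum.swap)
      also have "\<dots> = (\<Sum>m<l. \<Sum>q<s. B ! m $$ (q,j) *
        (\<Sum>k'<l. dft_omega l ^ (k*k') * A ! ((k' + l - m) mod l) $$ (i,q)))"
        by (simp add: sum_distrib_left)
      finally show ?thesis .
    qed
    also have "\<dots> = (\<Sum>m<l. \<Sum>q<s. B ! m $$ (q,j) * (dft_omega l ^ (k*m) * tdft A ! k $$ (i,q)))"
    proof (intro sum.cong refl)
      fix m q assume m: "m \<in> {..<l}" and q: "q \<in> {..<s}"
      show "B ! m $$ (q,j) * (\<Sum>k'<l. dft_omega l ^ (k*k') * A ! ((k' + l - m) mod l) $$ (i,q)) =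
            B ! m $$ (q,j) * (dft_omega l ^ (k*m) * tdft A ! k $$ (i,q))"
        using dft_reindex[OF l, of m k "\<lambda>a. A ! a $$ (i,q)"] m q tdft_tensor(2)[OF A l k i] by simp
    qed
    also have "\<dots> = (\<Sum>q<s. tdft A ! k $$ (i,q) * (\<Sum>m<l. dft_omega l ^ (k*m) * B ! m $$ (q,j)))"
    proof -
      have "(\<Sum>m<l. \<Sum>q<s. B ! m $$ (q,j) * (dft_omega l ^ (k*m) * tdft A ! k $$ (i,q))) =
            (\<Sum>q<s. \<Sum>m<l. B ! m $$ (q,j) * (dft_omega l ^ (k*m) * tdft A ! k $$ (i,q)))"
        by (rule sum.swap)
      then show ?thesis by (simp add: sum_distrib_left mult_ac)
    qed
    also have "\<dots> = (tdft A ! k * tdft B ! k) $$ (i,j)"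
      using mat_mult_entry[OF cA cB i j] tdft_tensor(2)[OF B l k _ j] by simp
    finally show "tdft (A \<star> B) ! k $$ (i,j) = (tdft A ! k * tdft B ! k) $$ (i,j)" .
  qed (use c1 cA cB in auto)
qed



definition adj :: "complex mat \<Rightarrow> complex mat" where
  "adj M = mat (dim_col M) (dim_row M) (\<lambda>(i,j). cnj (M $$ (j,i)))"

lemma cten_tensor:
  assumes A: "is_tensor r c l A"
  shows "is_tensor r c l (cten A)"
    and "\<And>k i j. k < l \<Longrightarrow> i < r \<Longrightarrow> j < c \<Longrightarrow> cten A ! k $$ (i,j) = of_real (A ! k $$ (i,j))"
  using A by (auto simp: cten_def is_tensor_def)

lemma cten_inj:
  assumes A: "is_tensor r c l A" and B: "is_tensor r c l B" and e: "cten A = cten B"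
  shows "A = B"
proof (rule tensor_eqI[OF A B])
  fix k i j assume "k < l" "i < r" "j < c"
  then show "A ! k $$ (i,j) = B ! k $$ (i,j)"
    using cten_tensor(2)[OF A] cten_tensor(2)[OF B] e by (metis of_real_eq_iff)
qed

lemma cten_tprod:
  assumes A: "is_tensor r s l A" and B: "is_tensor s c l B" and l: "0 < l"
  shows "cten (A \<star> B) = cten A \<star> cten B"
proof (rule tensor_eqI[OF cten_tensor(1)[OF tprod_tensor_entry(1)[OF A B l]]
      tprod_tensor_entry(1)[OF cten_tensor(1)[OF A] cten_tensor(1)[OF B] l]])
  fix k i j assume k: "k < l" and i: "i < r" and j: "j < c"
  have mm: "(k + l - m) mod l < l" for m using l by simp
  show "cten (A \<star> B) ! k $$ (i,j) = (cten A \<star> cten B) ! k $$ (i,j)"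
    using cten_tensor(2)[OF tprod_tensor_entry(1)[OF A B l] k i j]
      tprod_tensor_entry(2)[OF A B l k i j]
      tprod_tensor_entry(2)[OF cten_tensor(1)[OF A] cten_tensor(1)[OF B] l k i j]
      cten_tensor(2)[OF A mm i] cten_tensor(2)[OF B _ _ j]
    by simp
qed

lemma ttrans_tensor:
  assumes A: "is_tensor r c l A"
  shows "is_tensor c r l (ttrans A)"
    and "\<And>k i j. k < l \<Longrightarrow> i < c \<Longrightarrow> j < r \<Longrightarrow> ttrans A ! k $$ (i,j) = A ! ((l - k) mod l) $$ (j,i)"
proof -
  have lk: "(l - k) mod l < l" if "k < l" for k using that by simp
  then show "is_tensor c r l (ttrans A)" using A by (auto simp: ttrans_def is_tensor_def Let_def)
  fix k i j assume k: "k < l" and ij: "i < c" "j < r"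
  have C: "A ! ((l - k) mod l) \<in> carrier_mat r c" using tensorD[OF A lk[OF k]] .
  have L: "length A = l" using A by (simp add: is_tensor_def)
  show "ttrans A ! k $$ (i,j) = A ! ((l - k) mod l) $$ (j,i)"
    using C k ij by (simp add: ttrans_def L)
qed

lemma neg_mod_inv: fixes m l :: nat shows "m < l \<Longrightarrow> (l - (l - m) mod l) mod l = m"
  by (cases "m = 0") auto

lemma sum_neg_reindex:
  fixes l :: nat
  assumes l: "0 < l"
  shows "(\<Sum>m<l. g ((l - m) mod l)) = (\<Sum>m<l. g m)"
  by (rule sum.reindex_bij_witness[where j="\<lambda>m. (l - m) mod l" and i="\<lambda>m. (l - m) mod l"])
     (use l in \<open>auto simp: neg_mod_inv\<close>)

lemma om_neg:
  assumes l: "0 < l" and m: "m < l"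
  shows "dft_omega l ^ (((l - m) mod l) * j) = inverse (dft_omega l) ^ (m * j)"
proof -
  have "dft_omega l ^ ((l - m) mod l + m) = dft_omega l ^ 0"
    by (rule om_pow_cong[OF l]) (use m in \<open>cases "m = 0"; simp\<close>)
  then have "dft_omega l ^ ((l - m) mod l) * dft_omega l ^ m = 1" by (simp add: power_add)
  then have "dft_omega l ^ ((l - m) mod l) = inverse (dft_omega l ^ m)"
    by (simp add: field_simps om_nz)
  then show ?thesis by (simp add: power_mult power_inverse)
qed

lemma tdft_ttrans:
  assumes A: "is_tensor r c l A" and l: "0 < l" and k: "k < l"
  shows "tdft (cten (ttrans A)) ! k = adj (tdft (cten A) ! k)"
proof -
  note T = ttrans_tensor[OF A]
  have c1: "tdft (cten (ttrans A)) ! k \<in> carrier_mat c r"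
    using tensorD[OF tdft_tensor(1)[OF cten_tensor(1)[OF T(1)] l] k] .
  have c2: "tdft (cten A) ! k \<in> carrier_mat r c"
    using tensorD[OF tdft_tensor(1)[OF cten_tensor(1)[OF A] l] k] .
  show ?thesis
  proof (rule eq_matI)
    fix i j assume "i < dim_row (adj (tdft (cten A) ! k))" "j < dim_col (adj (tdft (cten A) ! k))"
    then have i: "i < c" and j: "j < r" using c2 by (auto simp: adj_def)
    have mm: "(l - m) mod l < l" for m using l by simp
    have "tdft (cten (ttrans A)) ! k $$ (i,j) = (\<Sum>m<l. dft_omega l ^ (k*m) * of_real (A ! ((l - m) mod l) $$ (j,i)))"
      using tdft_tensor(2)[OF cten_tensor(1)[OF T(1)] l k i j] cten_tensor(2)[OF T(1) _ i j] T(2)[OF _ i j]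
      by simp
    also have "\<dots> = (\<Sum>m<l. dft_omega l ^ (k*((l - m) mod l)) * of_real (A ! ((l - (l - m) mod l) mod l) $$ (j,i)))"
      by (rule sum_neg_reindex[OF l, symmetric, where g="\<lambda>m. dft_omega l ^ (k*m) * of_real (A ! ((l - m) mod l) $$ (j,i))"])
    also have "\<dots> = (\<Sum>m<l. inverse (dft_omega l) ^ (m*k) * of_real (A ! m $$ (j,i)))"
      by (intro sum.cong refl) (simp add: neg_mod_inv om_neg[OF l] mult.commute[of k])
    also have "\<dots> = cnj (tdft (cten A) ! k $$ (j,i))"
      using tdft_tensor(2)[OF cten_tensor(1)[OF A] l k j i] cten_tensor(2)[OF A _ j i]
      by (simp add: cnj_sum om_cnj complex_cnj_power mult.commute[of k])
    also have "\<dots> = adj (tdft (cten A) ! k) $$ (i,j)" using c2 i j by (simp add: adj_def)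
    finally show "tdft (cten (ttrans A)) ! k $$ (i,j) = adj (tdft (cten A) ! k) $$ (i,j)" .
  qed (use c1 c2 in \<open>auto simp: adj_def\<close>)
qed

lemma tid_tensor:
  "is_tensor n n l (tid n l)"
  "\<And>k i j. k < l \<Longrightarrow> i < n \<Longrightarrow> j < n \<Longrightarrow> tid n l ! k $$ (i,j) = (if k = 0 \<and> i = j then 1 else 0)"
  by (auto simp: tid_def is_tensor_def)

lemma cten_tid: "cten (tid n l) = tid n l"
  by (rule tensor_eqI[OF cten_tensor(1)[OF tid_tensor(1)] tid_tensor(1)])
     (simp add: cten_tensor(2)[OF tid_tensor(1)] tid_tensor(2))

lemma tdft_tid:
  assumes l: "0 < l" and k: "k < l"
  shows "tdft (tid n l) ! k = 1\<^sub>m n"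
proof (rule eq_matI)
  fix i j assume "i < dim_row (1\<^sub>m n :: complex mat)" "j < dim_col (1\<^sub>m n :: complex mat)"
  then have i: "i < n" and j: "j < n" by auto
  have "tdft (tid n l) ! k $$ (i,j) = (\<Sum>m<l. dft_omega l ^ (k*m) * (if m = 0 \<and> i = j then 1 else 0))"
    using tdft_tensor(2)[OF tid_tensor(1) l k i j] by (simp add: tid_tensor(2)[OF _ i j])
  also have "\<dots> = (\<Sum>m<l. if m = 0 then (if i = j then 1 else 0) else 0)"
    by (intro sum.cong) auto
  also have "\<dots> = (1\<^sub>m n :: complex mat) $$ (i,j)" using l i j by simp
  finally show "tdft (tid n l) ! k $$ (i,j) = (1\<^sub>m n :: complex mat) $$ (i,j)" .
qed (use tensorD[OF tdft_tensor(1)[OF tid_tensor(1) l] k] in auto)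

lemma tadd_tensor:
  assumes A: "is_tensor r c l A" and B: "is_tensor r c l B"
  shows "is_tensor r c l (A \<oplus>\<^sub>t B)"
    and "\<And>k i j. k < l \<Longrightarrow> i < r \<Longrightarrow> j < c \<Longrightarrow> (A \<oplus>\<^sub>t B) ! k $$ (i,j) = A ! k $$ (i,j) + B ! k $$ (i,j)"
  using A B by (auto simp: tadd_def is_tensor_def)

lemma tminus_tensor:
  assumes A: "is_tensor r c l A" and B: "is_tensor r c l B"
  shows "is_tensor r c l (A \<ominus>\<^sub>t B)"
    and "\<And>k i j. k < l \<Longrightarrow> i < r \<Longrightarrow> j < c \<Longrightarrow> (A \<ominus>\<^sub>t B) ! k $$ (i,j) = A ! k $$ (i,j) - B ! k $$ (i,j)"
  using A B by (auto simp: tminus_def is_tensor_def intro!: minus_carrier_mat)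

lemma tsmult_tensor:
  assumes A: "is_tensor r c l A"
  shows "is_tensor r c l (tsmult a A)"
    and "\<And>k i j. k < l \<Longrightarrow> i < r \<Longrightarrow> j < c \<Longrightarrow> (tsmult a A) ! k $$ (i,j) = a * A ! k $$ (i,j)"
  using A by (auto simp: tsmult_def is_tensor_def)

lemma cten_tadd:
  assumes A: "is_tensor r c l A" and B: "is_tensor r c l B"
  shows "cten (A \<oplus>\<^sub>t B) = cten A \<oplus>\<^sub>t cten B"
  by (rule tensor_eqI[OF cten_tensor(1)[OF tadd_tensor(1)[OF A B]]
        tadd_tensor(1)[OF cten_tensor(1)[OF A] cten_tensor(1)[OF B]]])
    (simp add: cten_tensor(2)[OF tadd_tensor(1)[OF A B]] tadd_tensor(2)[OF A B]
        tadd_tensor(2)[OF cten_tensor(1)[OF A] cten_tensor(1)[OF B]] cten_tensor(2)[OF A] cten_tensor(2)[OF B])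

lemma cten_tminus:
  assumes A: "is_tensor r c l A" and B: "is_tensor r c l B"
  shows "cten (A \<ominus>\<^sub>t B) = cten A \<ominus>\<^sub>t cten B"
  by (rule tensor_eqI[OF cten_tensor(1)[OF tminus_tensor(1)[OF A B]]
        tminus_tensor(1)[OF cten_tensor(1)[OF A] cten_tensor(1)[OF B]]])
    (simp add: cten_tensor(2)[OF tminus_tensor(1)[OF A B]] tminus_tensor(2)[OF A B]
        tminus_tensor(2)[OF cten_tensor(1)[OF A] cten_tensor(1)[OF B]] cten_tensor(2)[OF A] cten_tensor(2)[OF B])

lemma cten_tsmult:
  assumes A: "is_tensor r c l A"
  shows "cten (tsmult a A) = tsmult (of_real a) (cten A)"
  by (rule tensor_eqI[OF cten_tensor(1)[OF tsmult_tensor(1)[OF A]]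
        tsmult_tensor(1)[OF cten_tensor(1)[OF A]]])
    (simp add: cten_tensor(2)[OF tsmult_tensor(1)[OF A]] tsmult_tensor(2)[OF A]
        tsmult_tensor(2)[OF cten_tensor(1)[OF A]] cten_tensor(2)[OF A])

lemma tdft_tadd:
  assumes A: "is_tensor r c l A" and B: "is_tensor r c l B" and l: "0 < l" and k: "k < l"
  shows "tdft (A \<oplus>\<^sub>t B) ! k = tdft A ! k + tdft B ! k"
proof (rule eq_matI)
  note cA = tensorD[OF tdft_tensor(1)[OF A l] k] and cB = tensorD[OF tdft_tensor(1)[OF B l] k]
  fix i j assume "i < dim_row (tdft A ! k + tdft B ! k)" "j < dim_col (tdft A ! k + tdft B ! k)"
  then have i: "i < r" and j: "j < c" using cA cB by auto
  have "tdft (A \<oplus>\<^sub>t B) ! k $$ (i,j) = (\<Sum>m<l. dft_omega l ^ (k*m) * (A \<oplus>\<^sub>t B) ! m $$ (i,j))"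
    by (rule tdft_tensor(2)[OF tadd_tensor(1)[OF A B] l k i j])
  also have "\<dots> = (\<Sum>m<l. dft_omega l ^ (k*m) * A ! m $$ (i,j) + dft_omega l ^ (k*m) * B ! m $$ (i,j))"
    by (intro sum.cong refl) (simp add: tadd_tensor(2)[OF A B _ i j] distrib_left)
  also have "\<dots> = (tdft A ! k + tdft B ! k) $$ (i,j)"
    using tdft_tensor(2)[OF A l k i j] tdft_tensor(2)[OF B l k i j] cA cB i j
    by (simp add: sum.distrib)
  finally show "tdft (A \<oplus>\<^sub>t B) ! k $$ (i,j) = (tdft A ! k + tdft B ! k) $$ (i,j)" .
qed (use tensorD[OF tdft_tensor(1)[OF tadd_tensor(1)[OF A B] l] k] tensorD[OF tdft_tensor(1)[OF A l] k] tensorD[OF tdft_tensor(1)[OF B l] k] in auto)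

lemma tdft_tminus:
  assumes A: "is_tensor r c l A" and B: "is_tensor r c l B" and l: "0 < l" and k: "k < l"
  shows "tdft (A \<ominus>\<^sub>t B) ! k = tdft A ! k - tdft B ! k"
proof (rule eq_matI)
  note cA = tensorD[OF tdft_tensor(1)[OF A l] k] and cB = tensorD[OF tdft_tensor(1)[OF B l] k]
  fix i j assume "i < dim_row (tdft A ! k - tdft B ! k)" "j < dim_col (tdft A ! k - tdft B ! k)"
  then have i: "i < r" and j: "j < c" using cA cB by auto
  have "tdft (A \<ominus>\<^sub>t B) ! k $$ (i,j) = (\<Sum>m<l. dft_omega l ^ (k*m) * (A \<ominus>\<^sub>t B) ! m $$ (i,j))"
    by (rule tdft_tensor(2)[OF tminus_tensor(1)[OF A B] l k i j])
  also have "\<dots> = (\<Sum>m<l. dft_omega l ^ (k*m) * A ! m $$ (i,j) - dft_omega l ^ (k*m) * B ! m $$ (i,j))"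
    by (intro sum.cong refl) (simp add: tminus_tensor(2)[OF A B _ i j] right_diff_distrib)
  also have "\<dots> = (tdft A ! k - tdft B ! k) $$ (i,j)"
    using tdft_tensor(2)[OF A l k i j] tdft_tensor(2)[OF B l k i j] cA cB i j
    by (simp add: sum_subtractf)
  finally show "tdft (A \<ominus>\<^sub>t B) ! k $$ (i,j) = (tdft A ! k - tdft B ! k) $$ (i,j)" .
qed (use tensorD[OF tdft_tensor(1)[OF tminus_tensor(1)[OF A B] l] k] tensorD[OF tdft_tensor(1)[OF A l] k] tensorD[OF tdft_tensor(1)[OF B l] k] in auto)

lemma tdft_tsmult:
  assumes A: "is_tensor r c l A" and l: "0 < l" and k: "k < l"
  shows "tdft (tsmult a A) ! k = a \<cdot>\<^sub>m tdft A ! k"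
proof (rule eq_matI)
  note cA = tensorD[OF tdft_tensor(1)[OF A l] k]
  fix i j assume "i < dim_row (a \<cdot>\<^sub>m tdft A ! k)" "j < dim_col (a \<cdot>\<^sub>m tdft A ! k)"
  then have i: "i < r" and j: "j < c" using cA by auto
  have "tdft (tsmult a A) ! k $$ (i,j) = (\<Sum>m<l. dft_omega l ^ (k*m) * tsmult a A ! m $$ (i,j))"
    by (rule tdft_tensor(2)[OF tsmult_tensor(1)[OF A] l k i j])
  also have "\<dots> = (\<Sum>m<l. a * (dft_omega l ^ (k*m) * A ! m $$ (i,j)))"
    by (intro sum.cong refl) (simp add: tsmult_tensor(2)[OF A _ i j] mult_ac)
  also have "\<dots> = (a \<cdot>\<^sub>m tdft A ! k) $$ (i,j)"
    using tdft_tensor(2)[OF A l k i j] cA i j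
    by (simp add: sum_distrib_left)
  finally show "tdft (tsmult a A) ! k $$ (i,j) = (a \<cdot>\<^sub>m tdft A ! k) $$ (i,j)" .
qed (use tensorD[OF tdft_tensor(1)[OF tsmult_tensor(1)[OF A] l] k] tensorD[OF tdft_tensor(1)[OF A l] k] in auto)

lemma tdft_conj_sym:
  assumes A: "is_tensor r c l A" and l: "0 < l" and k: "k < l" and i: "i < r" and j: "j < c"
  shows "tdft (cten A) ! ((l - k) mod l) $$ (i,j) = cnj (tdft (cten A) ! k $$ (i,j))"
proof -
  have lk: "(l - k) mod l < l" using l by simp
  have "tdft (cten A) ! ((l - k) mod l) $$ (i,j) = (\<Sum>m<l. dft_omega l ^ (((l - k) mod l)*m) * of_real (A ! m $$ (i,j)))"
    using tdft_tensor(2)[OF cten_tensor(1)[OF A] l lk i j] cten_tensor(2)[OF A _ i j] by simp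
  also have "\<dots> = (\<Sum>m<l. inverse (dft_omega l) ^ (k*m) * of_real (A ! m $$ (i,j)))"
    by (simp add: om_neg[OF l k])
  also have "\<dots> = cnj (tdft (cten A) ! k $$ (i,j))"
    using tdft_tensor(2)[OF cten_tensor(1)[OF A] l k i j] cten_tensor(2)[OF A _ i j]
    by (simp add: cnj_sum om_cnj complex_cnj_power)
  finally show ?thesis .
qed

lemma tidft_real:
  assumes W: "is_tensor r c l W" and l: "0 < l"
    and sym: "\<And>k i j. k < l \<Longrightarrow> i < r \<Longrightarrow> j < c \<Longrightarrow> W ! ((l - k) mod l) $$ (i,j) = cnj (W ! k $$ (i,j))"
    and k: "k < l" and i: "i < r" and j: "j < c"
  shows "cnj (tidft W ! k $$ (i,j)) = tidft W ! k $$ (i,j)"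
proof -
  have "cnj (tidft W ! k $$ (i,j)) = (1 / of_nat l) * (\<Sum>m<l. dft_omega l ^ (m*k) * W ! ((l - m) mod l) $$ (i,j))"
    using tidft_tensor(2)[OF W l k i j] sym[OF _ i j]
    by (simp add: cnj_sum om_cnj complex_cnj_power)
  also have "(\<Sum>m<l. dft_omega l ^ (m*k) * W ! ((l - m) mod l) $$ (i,j)) =
      (\<Sum>m<l. (\<lambda>x. dft_omega l ^ (((l - x) mod l) * k) * W ! x $$ (i,j)) ((l - m) mod l))"
    by (intro sum.cong refl) (simp add: neg_mod_inv)
  also have "\<dots> = (\<Sum>m<l. dft_omega l ^ (((l - m) mod l) * k) * W ! m $$ (i,j))"
    by (rule sum_neg_reindex[OF l])
  also have "\<dots> = (\<Sum>m<l. inverse (dft_omega l) ^ (m * k) * W ! m $$ (i,j))"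
    by (intro sum.cong refl) (simp add: om_neg[OF l])
  finally show ?thesis using tidft_tensor(2)[OF W l k i j] by simp
qed

definition rten :: "complex tensor \<Rightarrow> real tensor" where
  "rten Z = map (map_mat Re) Z"

lemma rten_tensor:
  assumes Z: "is_tensor r c l Z"
  shows "is_tensor r c l (rten Z)"
    and "\<And>k i j. k < l \<Longrightarrow> i < r \<Longrightarrow> j < c \<Longrightarrow> rten Z ! k $$ (i,j) = Re (Z ! k $$ (i,j))"
  using Z by (auto simp: rten_def is_tensor_def)

lemma cten_rten:
  assumes Z: "is_tensor r c l Z"
    and re: "\<And>k i j. k < l \<Longrightarrow> i < r \<Longrightarrow> j < c \<Longrightarrow> cnj (Z ! k $$ (i,j)) = Z ! k $$ (i,j)"
  shows "cten (rten Z) = Z"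
proof (rule tensor_eqI[OF cten_tensor(1)[OF rten_tensor(1)[OF Z]] Z])
  fix k i j assume "k < l" "i < r" "j < c"
  then show "cten (rten Z) ! k $$ (i,j) = Z ! k $$ (i,j)"
    using cten_tensor(2)[OF rten_tensor(1)[OF Z]] rten_tensor(2)[OF Z] re
    by (metis Reals_cnj_iff complex_is_Real_iff of_real_Re)
qed



section \<open>Gram-Schmidt on column functions\<close>

definition ip :: "nat \<Rightarrow> (nat \<Rightarrow> complex) \<Rightarrow> (nat \<Rightarrow> complex) \<Rightarrow> complex" where
  "ip n u v = (\<Sum>r<n. cnj (u r) * v r)"

definition vnorm :: "nat \<Rightarrow> (nat \<Rightarrow> complex) \<Rightarrow> real" where
  "vnorm n w = sqrt (\<Sum>r<n. (cmod (w r))\<^sup>2)"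

function gsq :: "nat \<Rightarrow> (nat \<Rightarrow> nat \<Rightarrow> complex) \<Rightarrow> nat \<Rightarrow> nat \<Rightarrow> complex" where
  "gsq n a j = (let w = (\<lambda>i. a i j - (\<Sum>m<j. ip n (gsq n a m) (\<lambda>r. a r j) * gsq n a m i))
                in (\<lambda>i. w i / of_real (vnorm n w)))"
  by pat_completeness auto
termination by (relation "measure (\<lambda>(n,a,j). j)") auto

declare gsq.simps[simp del]

definition gsw :: "nat \<Rightarrow> (nat \<Rightarrow> nat \<Rightarrow> complex) \<Rightarrow> nat \<Rightarrow> nat \<Rightarrow> complex" where
  "gsw n a j = (\<lambda>i. a i j - (\<Sum>m<j. ip n (gsq n a m) (\<lambda>r. a r j) * gsq n a m i))"

lemma gsq_eq: "gsq n a j i = gsw n a j i / of_real (vnorm n (gsw n a j))"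
  by (subst gsq.simps) (simp add: gsw_def Let_def)

lemma ip_cong: "(\<And>r. r < n \<Longrightarrow> v r = v' r) \<Longrightarrow> ip n u v = ip n u v'"
  by (simp add: ip_def)

lemma ip_cnj: "ip n u v = cnj (ip n v u)"
  by (simp add: ip_def cnj_sum mult.commute)

lemma ip_self: "ip n w w = of_real ((vnorm n w)\<^sup>2)"
proof -
  have "ip n w w = (\<Sum>r<n. of_real ((cmod (w r))\<^sup>2))"
    unfolding ip_def by (intro sum.cong refl) (subst complex_norm_square, rule mult.commute)
  also have "\<dots> = of_real ((vnorm n w)\<^sup>2)"
    by (simp add: vnorm_def sum_nonneg)
  finally show ?thesis .
qed

lemma ip_lin:
  "ip n u (\<lambda>i. x i - (\<Sum>m\<in>S. c m * y m i)) = ip n u x - (\<Sum>m\<in>S. c m * ip n u (y m))"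
proof -
  have "ip n u (\<lambda>i. x i - (\<Sum>m\<in>S. c m * y m i)) = ip n u x - (\<Sum>r<n. \<Sum>m\<in>S. c m * (cnj (u r) * y m r))"
    by (simp add: ip_def right_diff_distrib sum_subtractf sum_distrib_left mult_ac)
  also have "(\<Sum>r<n. \<Sum>m\<in>S. c m * (cnj (u r) * y m r)) = (\<Sum>m\<in>S. \<Sum>r<n. c m * (cnj (u r) * y m r))"
    by (rule sum.swap)
  also have "\<dots> = (\<Sum>m\<in>S. c m * ip n u (y m))"
    by (simp add: ip_def sum_distrib_left)
  finally show ?thesis .
qed

lemma ip_sum:
  "ip n u (\<lambda>i. (\<Sum>m\<in>S. c m * y m i)) = (\<Sum>m\<in>S. c m * ip n u (y m))"
proof -
  have "ip n u (\<lambda>i. (\<Sum>m\<in>S. c m * y m i)) = (\<Sum>r<n. \<Sum>m\<in>S. c m * (cnj (u r) * y m r))"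
    by (simp add: ip_def sum_distrib_left mult_ac)
  also have "\<dots> = (\<Sum>m\<in>S. \<Sum>r<n. c m * (cnj (u r) * y m r))"
    by (rule sum.swap)
  also have "\<dots> = (\<Sum>m\<in>S. c m * ip n u (y m))"
    by (simp add: ip_def sum_distrib_left)
  finally show ?thesis .
qed

lemma ip_div_right: "ip n u (\<lambda>i. v i / c) = ip n u v / c"
  by (simp add: ip_def sum_divide_distrib)

lemma ip_div_left: "ip n (\<lambda>i. v i / of_real c) w = ip n v w / of_real c"
  by (simp add: ip_def sum_divide_distrib)

lemma vnorm_nonneg: "0 \<le> vnorm n w"
  by (simp add: vnorm_def sum_nonneg)

context
  fixes n p :: nat and a :: "nat \<Rightarrow> nat \<Rightarrow> complex"
  assumes pos: "\<And>m. m < p \<Longrightarrow> vnorm n (gsw n a m) > 0"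
begin

lemma gs_orth_aux:
  "j < p \<Longrightarrow> \<forall>m\<le>j. \<forall>m'\<le>j. ip n (gsq n a m) (gsq n a m') = (if m = m' then 1 else 0)"
proof (induction j)
  case 0
  have "ip n (gsq n a 0) (gsq n a 0) = 1"
  proof -
    have g: "gsq n a 0 = (\<lambda>i. gsw n a 0 i / of_real (vnorm n (gsw n a 0)))"
      by (rule ext) (rule gsq_eq)
    have "ip n (gsq n a 0) (gsq n a 0) = ip n (gsw n a 0) (gsw n a 0) / (of_real (vnorm n (gsw n a 0)) * of_real (vnorm n (gsw n a 0)))"
      unfolding g ip_div_left ip_div_right by simp
    also have "\<dots> = 1" using pos[of 0] 0 by (simp add: ip_self power2_eq_square)
    finally show ?thesis .
  qed
  then show ?case by simp
next
  case (Suc j)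
  let ?q = "gsq n a" and ?w = "gsw n a (Suc j)" and ?N = "vnorm n (gsw n a (Suc j))"
  have IH: "\<forall>m\<le>j. \<forall>m'\<le>j. ip n (?q m) (?q m') = (if m = m' then 1 else 0)" using Suc by simp
  have g: "?q (Suc j) = (\<lambda>i. ?w i / of_real ?N)" by (rule ext) (rule gsq_eq)
  have N: "?N > 0" using pos Suc.prems by simp
  have w: "?w = (\<lambda>i. a i (Suc j) - (\<Sum>m<Suc j. ip n (?q m) (\<lambda>r. a r (Suc j)) * ?q m i))"
    by (simp add: gsw_def)
  have o1: "ip n (?q m) (?q (Suc j)) = 0" if m: "m \<le> j" for m
  proof -
    have "ip n (?q m) ?w = ip n (?q m) (\<lambda>r. a r (Suc j)) -
        (\<Sum>m'<Suc j. ip n (?q m') (\<lambda>r. a r (Suc j)) * ip n (?q m) (?q m'))"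
      unfolding w by (rule ip_lin)
    also have "(\<Sum>m'<Suc j. ip n (?q m') (\<lambda>r. a r (Suc j)) * ip n (?q m) (?q m')) =
               (\<Sum>m'<Suc j. if m' = m then ip n (?q m) (\<lambda>r. a r (Suc j)) else 0)"
      by (intro sum.cong refl) (use IH m in auto)
    also have "\<dots> = ip n (?q m) (\<lambda>r. a r (Suc j))" using m by simp
    finally have "ip n (?q m) ?w = 0" by simp
    then show ?thesis unfolding g ip_div_right by simp
  qed
  have o2: "ip n (?q (Suc j)) (?q (Suc j)) = 1"
  proof -
    have "ip n (?q (Suc j)) (?q (Suc j)) = ip n ?w ?w / (of_real ?N * of_real ?N)"
      unfolding g ip_div_left ip_div_right by simp
    also have "\<dots> = 1" using N by (simp add: ip_self power2_eq_square)
    finally show ?thesis .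
  qed
  show ?case
  proof (intro allI impI)
    fix m m' assume m: "m \<le> Suc j" and m': "m' \<le> Suc j"
    show "ip n (?q m) (?q m') = (if m = m' then 1 else 0)"
    proof (cases "m = Suc j")
      case True
      show ?thesis
      proof (cases "m' = Suc j")
        case True then show ?thesis using o2 \<open>m = Suc j\<close> by simp
      next
        case False
        then have "m' \<le> j" using m' by simp
        then show ?thesis using o1[of m'] \<open>m = Suc j\<close> False by (subst ip_cnj) simp
      qed
    next
      case False
      then have mj: "m \<le> j" using m by simp
      show ?thesis
      proof (cases "m' = Suc j")
        case True then show ?thesis using o1[OF mj] mj by simp
      next
        case False
        then show ?thesis using IH mj m' by simp
      qed
    qed
  qed
qed

lemma gs_orth: "m < p \<Longrightarrow> m' < p \<Longrightarrow> ip n (gsq n a m) (gsq n a m') = (if m = m' then 1 else 0)"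
  using gs_orth_aux[of "max m m'"] by (simp add: max_def)

lemma gs_decomp:
  assumes j: "j < p" and i: "i < n"
  shows "a i j = (\<Sum>m<Suc j. ip n (gsq n a m) (\<lambda>r. a r j) * gsq n a m i)"
    and "ip n (gsq n a j) (\<lambda>r. a r j) = of_real (vnorm n (gsw n a j))"
proof -
  let ?q = "gsq n a" and ?w = "gsw n a j" and ?N = "vnorm n (gsw n a j)"
  have g: "?q j = (\<lambda>i. ?w i / of_real ?N)" by (rule ext) (rule gsq_eq)
  have N: "?N > 0" using pos j by simp
  have w: "?w = (\<lambda>i. a i j - (\<Sum>m<j. ip n (?q m) (\<lambda>r. a r j) * ?q m i))"
    by (simp add: gsw_def)
  have "ip n (?q j) ?w = ip n (?q j) (\<lambda>r. a r j) -
        (\<Sum>m'<j. ip n (?q m') (\<lambda>r. a r j) * ip n (?q j) (?q m'))"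
    unfolding w by (rule ip_lin)
  also have "(\<Sum>m'<j. ip n (?q m') (\<lambda>r. a r j) * ip n (?q j) (?q m')) = 0"
    by (intro sum.neutral) (use gs_orth j in auto)
  finally have e1: "ip n (?q j) ?w = ip n (?q j) (\<lambda>r. a r j)" by simp
  have "ip n (?q j) ?w = ip n ?w ?w / of_real ?N" unfolding g ip_div_left by simp
  also have "\<dots> = of_real ?N" using N by (simp add: ip_self power2_eq_square)
  finally show R: "ip n (?q j) (\<lambda>r. a r j) = of_real ?N" using e1 by simp
  have "?w i = of_real ?N * ?q j i" using N g by simp
  then have "a i j = (\<Sum>m<j. ip n (?q m) (\<lambda>r. a r j) * ?q m i) + of_real ?N * ?q j i"
    unfolding w by (simp add: algebra_simps)
  then show "a i j = (\<Sum>m<Suc j. ip n (?q m) (\<lambda>r. a r j) * ?q m i)" using R by simp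
qed

lemma gs_upper:
  assumes j: "j < p" and m: "m < p" and jm: "j < m"
  shows "ip n (gsq n a m) (\<lambda>r. a r j) = 0"
proof -
  let ?q = "gsq n a"
  have "ip n (?q m) (\<lambda>r. a r j) = ip n (?q m) (\<lambda>r. (\<Sum>m'<Suc j. ip n (?q m') (\<lambda>r. a r j) * ?q m' r))"
    by (rule ip_cong) (use gs_decomp(1)[OF j] in blast)
  also have "\<dots> = (\<Sum>m'<Suc j. ip n (?q m') (\<lambda>r. a r j) * ip n (?q m) (?q m'))"
    by (rule ip_sum)
  also have "\<dots> = 0" by (intro sum.neutral) (use gs_orth j m jm in auto)
  finally show ?thesis .
qed

end


lemma ip_cong2: "(\<And>r. r < n \<Longrightarrow> u r = u' r) \<Longrightarrow> (\<And>r. r < n \<Longrightarrow> v r = v' r) \<Longrightarrow> ip n u v = ip n u' v'"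
  by (simp add: ip_def)

lemma vnorm_cong: "(\<And>r. r < n \<Longrightarrow> w r = w' r) \<Longrightarrow> vnorm n w = vnorm n w'"
  by (simp add: vnorm_def)

lemma vnorm_eq_of_ip:
  assumes "ip n w w = of_real (c\<^sup>2)" "0 \<le> c"
  shows "vnorm n w = c"
proof -
  have "(vnorm n w)\<^sup>2 = c\<^sup>2" using assms(1) ip_self[of n w] by (metis of_real_eq_iff)
  then show ?thesis using vnorm_nonneg[of n w] assms(2) by (metis power2_eq_imp_eq)
qed

lemma gs_unique:
  fixes Qf Rf a :: "nat \<Rightarrow> nat \<Rightarrow> complex"
  assumes orth: "\<And>m m'. m < p \<Longrightarrow> m' < p \<Longrightarrow> ip n (\<lambda>r. Qf r m) (\<lambda>r. Qf r m') = (if m = m' then 1 else 0)"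
    and dec: "\<And>i j. i < n \<Longrightarrow> j < p \<Longrightarrow> a i j = (\<Sum>m<p. Qf i m * Rf m j)"
    and up: "\<And>m j. m < p \<Longrightarrow> j < m \<Longrightarrow> Rf m j = 0"
    and dg: "\<And>j. j < p \<Longrightarrow> Im (Rf j j) = 0 \<and> Re (Rf j j) > 0"
  shows "j < p \<Longrightarrow> vnorm n (gsw n a j) > 0 \<and> (\<forall>i<n. gsq n a j i = Qf i j)"
proof (induction j rule: less_induct)
  case (less j)
  note j = less.prems
  have IH: "\<And>m i. m < j \<Longrightarrow> i < n \<Longrightarrow> gsq n a m i = Qf i m" using less.IH j by auto
  define \<rho> where "\<rho> = Re (Rf j j)"
  have Rjj: "Rf j j = of_real \<rho>" using dg[OF j] by (simp add: \<rho>_def complex_eq_iff)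
  have rho: "\<rho> > 0" using dg[OF j] by (simp add: \<rho>_def)
  have aj: "a i j = (\<Sum>m<Suc j. Rf m j * Qf i m)" if i: "i < n" for i
  proof -
    have "a i j = (\<Sum>m<p. Qf i m * Rf m j)" by (rule dec[OF i j])
    also have "\<dots> = (\<Sum>m<Suc j. Qf i m * Rf m j)"
      by (rule sum.mono_neutral_right) (use j up in auto)
    finally show ?thesis by (simp add: mult.commute)
  qed
  have ipa: "ip n (gsq n a m) (\<lambda>r. a r j) = Rf m j" if m: "m < j" for m
  proof -
    have "ip n (gsq n a m) (\<lambda>r. a r j) = ip n (\<lambda>r. Qf r m) (\<lambda>r. \<Sum>m'<Suc j. Rf m' j * Qf r m')"
      by (rule ip_cong2) (use IH m aj in auto)
    also have "\<dots> = (\<Sum>m'<Suc j. Rf m' j * ip n (\<lambda>r. Qf r m) (\<lambda>r. Qf r m'))"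
      by (rule ip_sum)
    also have "\<dots> = (\<Sum>m'<Suc j. if m' = m then Rf m j else 0)"
      by (intro sum.cong refl) (use orth m j in auto)
    also have "\<dots> = Rf m j" using m by simp
    finally show ?thesis .
  qed
  have w: "gsw n a j i = Rf j j * Qf i j" if i: "i < n" for i
  proof -
    have "gsw n a j i = a i j - (\<Sum>m<j. Rf m j * Qf i m)"
      unfolding gsw_def using IH ipa i by simp
    also have "\<dots> = Rf j j * Qf i j" using aj[OF i] by simp
    finally show ?thesis .
  qed
  have "ip n (gsw n a j) (gsw n a j) = ip n (\<lambda>i. Rf j j * Qf i j) (\<lambda>i. Rf j j * Qf i j)"
    by (rule ip_cong2) (use w in auto)
  also have "\<dots> = cnj (Rf j j) * Rf j j * ip n (\<lambda>i. Qf i j) (\<lambda>i. Qf i j)"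
    by (simp add: ip_def sum_distrib_left mult_ac)
  also have "\<dots> = of_real (\<rho>\<^sup>2)" using orth[OF j j] Rjj by (simp add: power2_eq_square)
  finally have N: "vnorm n (gsw n a j) = \<rho>" by (rule vnorm_eq_of_ip) (use rho in simp)
  show ?case
  proof (intro conjI allI impI)
    show "vnorm n (gsw n a j) > 0" using N rho by simp
    fix i assume i: "i < n"
    show "gsq n a j i = Qf i j" using gsq_eq[of n a j i] N w[OF i] Rjj rho by simp
  qed
qed



definition cvd :: "(real \<Rightarrow> complex) \<Rightarrow> bool" where
  "cvd f \<longleftrightarrow> (\<exists>d. (f has_vector_derivative d) (at 0))"

definition rvd :: "(real \<Rightarrow> real) \<Rightarrow> bool" where
  "rvd f \<longleftrightarrow> (\<exists>d. (f has_real_derivative d) (at 0))"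

lemma cvd_const: "cvd (\<lambda>t. c)"
  unfolding cvd_def by (rule exI) (rule has_vector_derivative_const)

lemma cvd_add: "cvd f \<Longrightarrow> cvd g \<Longrightarrow> cvd (\<lambda>t. f t + g t)"
  unfolding cvd_def by (auto intro: has_vector_derivative_add)

lemma cvd_diff: "cvd f \<Longrightarrow> cvd g \<Longrightarrow> cvd (\<lambda>t. f t - g t)"
  unfolding cvd_def by (auto intro: has_vector_derivative_diff)

lemma cvd_mult: "cvd f \<Longrightarrow> cvd g \<Longrightarrow> cvd (\<lambda>t. f t * g t)"
  unfolding cvd_def by (auto intro: has_vector_derivative_mult)

lemma cvd_cnj: "cvd f \<Longrightarrow> cvd (\<lambda>t. cnj (f t))"
  unfolding cvd_def by (auto intro: has_vector_derivative_cnj)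

lemma cvd_sum: "finite S \<Longrightarrow> (\<And>x. x \<in> S \<Longrightarrow> cvd (f x)) \<Longrightarrow> cvd (\<lambda>t. \<Sum>x\<in>S. f x t)"
proof (induction S rule: finite_induct)
  case empty then show ?case by (simp add: cvd_const)
next
  case (insert x F) then show ?case by (simp add: cvd_add)
qed

lemma cvd_of_real: "rvd f \<Longrightarrow> cvd (\<lambda>t. of_real (f t))"
  unfolding cvd_def rvd_def by (auto intro: has_vector_derivative_of_real)

lemma rvd_Re: "cvd f \<Longrightarrow> rvd (\<lambda>t. Re (f t))"
  unfolding cvd_def rvd_def by (auto intro: has_field_derivative_Re)

lemma rvd_Im: "cvd f \<Longrightarrow> rvd (\<lambda>t. Im (f t))"
  unfolding cvd_def rvd_def by (auto intro: has_field_derivative_Im)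

lemma rvd_add: "rvd f \<Longrightarrow> rvd g \<Longrightarrow> rvd (\<lambda>t. f t + g t)"
  unfolding rvd_def by (auto intro: derivative_intros)

lemma rvd_mult: "rvd f \<Longrightarrow> rvd g \<Longrightarrow> rvd (\<lambda>t. f t * g t)"
  unfolding rvd_def by (auto intro: derivative_intros)

lemma rvd_sum: "finite S \<Longrightarrow> (\<And>x. x \<in> S \<Longrightarrow> rvd (f x)) \<Longrightarrow> rvd (\<lambda>t. \<Sum>x\<in>S. f x t)"
proof (induction S rule: finite_induct)
  case empty then show ?case by (auto simp: rvd_def intro: derivative_intros)
next
  case (insert x F) then show ?case by (simp add: rvd_add)
qed

lemma rvd_sqrt: "rvd f \<Longrightarrow> f 0 > 0 \<Longrightarrow> rvd (\<lambda>t. sqrt (f t))"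
  unfolding rvd_def using DERIV_chain2[OF DERIV_real_sqrt] by blast

lemma rvd_inverse: "rvd f \<Longrightarrow> f 0 \<noteq> 0 \<Longrightarrow> rvd (\<lambda>t. inverse (f t))"
  unfolding rvd_def using DERIV_inverse' by blast

lemma rvd_ev_pos: "rvd f \<Longrightarrow> f 0 > 0 \<Longrightarrow> eventually (\<lambda>t. f t > 0) (nhds 0)"
proof -
  assume "rvd f" "f 0 > 0"
  then obtain d where "(f has_real_derivative d) (at 0)" unfolding rvd_def by blast
  then have "isCont f 0" by (rule DERIV_isCont)
  then have "(f \<longlongrightarrow> f 0) (at 0)" by (simp add: isCont_def)
  then have "eventually (\<lambda>t. 0 < f t) (at 0)" using \<open>f 0 > 0\<close> by (rule order_tendstoD(1))
  then show ?thesis using \<open>f 0 > 0\<close> by (simp add: eventually_nhds_conv_at)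
qed

definition apar :: "(nat \<Rightarrow> nat \<Rightarrow> complex) \<Rightarrow> (nat \<Rightarrow> nat \<Rightarrow> complex) \<Rightarrow> real \<Rightarrow> nat \<Rightarrow> nat \<Rightarrow> complex" where
  "apar a0 a1 t = (\<lambda>i j. a0 i j + of_real t * a1 i j)"

lemma apar0: "apar a0 a1 0 = a0"
  by (simp add: apar_def)

lemma cvd_apar: "cvd (\<lambda>t. apar a0 a1 t i j)"
  unfolding apar_def by (intro cvd_add cvd_const cvd_mult cvd_of_real) (auto simp: rvd_def intro: derivative_intros)

lemma vnorm_sq_expand: "vnorm n w = sqrt (\<Sum>r<n. Re (w r) * Re (w r) + Im (w r) * Im (w r))"
  unfolding vnorm_def by (simp add: cmod_power2 power2_eq_square[symmetric])

lemma gs_param_cd: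
  assumes pos0: "\<And>m. m < p \<Longrightarrow> vnorm n (gsw n a0 m) > 0"
  shows "m < p \<Longrightarrow> (\<forall>i. cvd (\<lambda>t. gsw n (apar a0 a1 t) m i)) \<and> rvd (\<lambda>t. vnorm n (gsw n (apar a0 a1 t) m))
        \<and> (\<forall>i. cvd (\<lambda>t. gsq n (apar a0 a1 t) m i))"
proof (induction m rule: less_induct)
  case (less m)
  have IH: "\<And>m' i. m' < m \<Longrightarrow> cvd (\<lambda>t. gsq n (apar a0 a1 t) m' i)" using less by auto
  have w: "cvd (\<lambda>t. gsw n (apar a0 a1 t) m i)" for i
    unfolding gsw_def ip_def
    by (intro cvd_diff cvd_sum cvd_mult cvd_cnj cvd_apar IH) auto
  have N: "rvd (\<lambda>t. vnorm n (gsw n (apar a0 a1 t) m))"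
    unfolding vnorm_sq_expand
    by (intro rvd_sqrt rvd_sum rvd_add rvd_mult rvd_Re rvd_Im w)
       (use pos0[OF less.prems] in \<open>simp_all add: apar0 vnorm_sq_expand\<close>)
  have Ninv: "rvd (\<lambda>t. inverse (vnorm n (gsw n (apar a0 a1 t) m)))"
    by (rule rvd_inverse[OF N]) (use pos0[OF less.prems] in \<open>simp add: apar0\<close>)
  have q: "cvd (\<lambda>t. gsq n (apar a0 a1 t) m i)" for i
  proof -
    have "cvd (\<lambda>t. gsw n (apar a0 a1 t) m i * of_real (inverse (vnorm n (gsw n (apar a0 a1 t) m))))"
      by (intro cvd_mult w cvd_of_real Ninv)
    then show ?thesis by (simp add: gsq_eq divide_inverse)
  qed
  show ?case using w N q by blast
qed

lemma gs_param_ev: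
  assumes pos0: "\<And>m. m < p \<Longrightarrow> vnorm n (gsw n a0 m) > 0"
  shows "eventually (\<lambda>t. \<forall>m<p. vnorm n (gsw n (apar a0 a1 t) m) > 0) (nhds 0)"
proof -
  have "\<forall>m\<in>{..<p}. eventually (\<lambda>t. vnorm n (gsw n (apar a0 a1 t) m) > 0) (nhds 0)"
  proof
    fix m assume "m \<in> {..<p}"
    then have m: "m < p" by simp
    show "eventually (\<lambda>t. vnorm n (gsw n (apar a0 a1 t) m) > 0) (nhds 0)"
      by (rule rvd_ev_pos) (use gs_param_cd[OF pos0 m] pos0[OF m] in \<open>simp_all add: apar0\<close>)
  qed
  then have "eventually (\<lambda>t. \<forall>m\<in>{..<p}. vnorm n (gsw n (apar a0 a1 t) m) > 0) (nhds 0)"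
    by (rule eventually_ball_finite[rotated]) simp
  then show ?thesis by (rule eventually_mono) auto
qed



lemma adj_carrier[simp]: "A \<in> carrier_mat r c \<Longrightarrow> adj A \<in> carrier_mat c r"
  by (simp add: adj_def)

lemma adj_dims[simp]: "dim_row (adj A) = dim_col A" "dim_col (adj A) = dim_row A"
  by (simp_all add: adj_def)

lemma adj_index[simp]: "i < dim_col A \<Longrightarrow> j < dim_row A \<Longrightarrow> adj A $$ (i,j) = cnj (A $$ (j,i))"
  by (simp add: adj_def)

lemma adj_adj: "adj (adj A) = A"
  by (rule eq_matI) (auto simp: adj_def)

lemma adj_mult:
  assumes A: "A \<in> carrier_mat r s" and B: "B \<in> carrier_mat s c"
  shows "adj (A * B) = adj B * adj A"
  by (rule eq_matI) (use A B in \<open>auto simp: adj_def scalar_prod_def cnj_sum mult.commute\<close>)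

lemma Pskew_skew_upper:
  assumes O: "\<Omega> \<in> carrier_mat p p" and U: "U \<in> carrier_mat p p"
    and sk: "\<And>i j. i < p \<Longrightarrow> j < p \<Longrightarrow> \<Omega> $$ (i,j) = - cnj (\<Omega> $$ (j,i))"
    and ut: "upper_triangular U" and ud: "\<And>i. i < p \<Longrightarrow> Im (U $$ (i,i)) = 0"
  shows "Pskew (\<Omega> + U) = \<Omega>"
proof (rule eq_matI)
  fix i j assume "i < dim_row \<Omega>" "j < dim_col \<Omega>"
  then have i: "i < p" and j: "j < p" using O by auto
  have Uz: "U $$ (a,b) = 0" if "b < a" "a < p" for a b
    using ut that U unfolding upper_triangular_def by auto
  show "Pskew (\<Omega> + U) $$ (i,j) = \<Omega> $$ (i,j)"
  proof (cases "j < i")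
    case True then show ?thesis using i j O U Uz[OF True i] by (simp add: Pskew_def)
  next
    case False
    show ?thesis
    proof (cases "i = j")
      case True
      have "\<Omega> $$ (i,i) = - cnj (\<Omega> $$ (i,i))" using sk[OF i i] .
      then have "Re (\<Omega> $$ (i,i)) = 0" by (simp add: complex_eq_iff)
      then show ?thesis using True i O U ud[OF i]
        by (simp add: Pskew_def complex_eq_iff)
    next
      case False
      then have ij: "i < j" using \<open>\<not> j < i\<close> by simp
      have "Pskew (\<Omega> + U) $$ (i,j) = - cnj (\<Omega> $$ (j,i) + U $$ (j,i))"
        using i j O U ij by (simp add: Pskew_def)
      also have "\<dots> = \<Omega> $$ (i,j)" using Uz[OF ij j] sk[OF i j] by simp
      finally show ?thesis .
    qed
  qed
qed (use O U in \<open>auto simp: Pskew_def\<close>)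

lemma upper_inverse:
  fixes R Y :: "complex mat"
  assumes R: "R \<in> carrier_mat p p" and Y: "Y \<in> carrier_mat p p"
    and ut: "upper_triangular R" and nz: "\<And>i. i < p \<Longrightarrow> R $$ (i,i) \<noteq> 0"
    and RY: "R * Y = 1\<^sub>m p"
  shows "upper_triangular Y" and "\<And>i. i < p \<Longrightarrow> Y $$ (i,i) = inverse (R $$ (i,i))"
proof -
  have Rz: "R $$ (a,b) = 0" if "b < a" "a < p" for a b
    using ut that R unfolding upper_triangular_def by auto
  have prod: "(R * Y) $$ (i,j) = R $$ (i,i) * Y $$ (i,j) + (\<Sum>m\<in>{..<p} - {i}. R $$ (i,m) * Y $$ (m,j))"
    if i: "i < p" and j: "j < p" for i j
  proof -
    have "(R * Y) $$ (i,j) = (\<Sum>m<p. R $$ (i,m) * Y $$ (m,j))"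
      by (rule mat_mult_entry[OF R Y i j])
    also have "\<dots> = R $$ (i,i) * Y $$ (i,j) + (\<Sum>m\<in>{..<p} - {i}. R $$ (i,m) * Y $$ (m,j))"
      using i by (subst sum.remove[of _ i]) auto
    finally show ?thesis .
  qed
  have low: "\<forall>j<i. Y $$ (i,j) = 0" if "i < p" for i
    using that
  proof (induction "p - i" arbitrary: i rule: less_induct)
    case less
    note i = less.prems
    show ?case
    proof (intro allI impI)
      fix j assume ji: "j < i"
      have j: "j < p" using ji i by simp
      have "(\<Sum>m\<in>{..<p} - {i}. R $$ (i,m) * Y $$ (m,j)) = 0"
      proof (intro sum.neutral ballI)
        fix m assume m: "m \<in> {..<p} - {i}"
        show "R $$ (i,m) * Y $$ (m,j) = 0"
        proof (cases "m < i")
          case True then show ?thesis using Rz[OF True i] by simp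
        next
          case False
          then have "i < m" "m < p" using m by auto
          then have "Y $$ (m,j) = 0" using less.hyps[of m] ji by auto
          then show ?thesis by simp
        qed
      qed
      moreover have "(R * Y) $$ (i,j) = 0" using RY i j ji by simp
      ultimately have "R $$ (i,i) * Y $$ (i,j) = 0" using prod[OF i j] by simp
      then show "Y $$ (i,j) = 0" using nz[OF i] by simp
    qed
  qed
  show "upper_triangular Y" unfolding upper_triangular_def using low Y by auto
  fix i assume i: "i < p"
  have "(\<Sum>m\<in>{..<p} - {i}. R $$ (i,m) * Y $$ (m,i)) = 0"
  proof (intro sum.neutral ballI)
    fix m assume m: "m \<in> {..<p} - {i}"
    show "R $$ (i,m) * Y $$ (m,i) = 0"
    proof (cases "m < i")
      case True then show ?thesis using Rz[OF True i] by simp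
    next
      case False
      then have "i < m" "m < p" using m by auto
      then show ?thesis using low[of m] by auto
    qed
  qed
  moreover have "(R * Y) $$ (i,i) = 1" using RY i by simp
  ultimately have "R $$ (i,i) * Y $$ (i,i) = 1" using prod[OF i i] by simp
  then show "Y $$ (i,i) = inverse (R $$ (i,i))" using nz[OF i] by (simp add: field_simps)
qed

lemma upper_mult:
  fixes E Y :: "complex mat"
  assumes E: "E \<in> carrier_mat p p" and Y: "Y \<in> carrier_mat p p"
    and Eu: "upper_triangular E" and Yu: "upper_triangular Y"
  shows "upper_triangular (E * Y)"
    and "\<And>i. i < p \<Longrightarrow> (E * Y) $$ (i,i) = E $$ (i,i) * Y $$ (i,i)"
proof -
  have Ez: "E $$ (a,b) = 0" if "b < a" "a < p" for a b
    using Eu that E unfolding upper_triangular_def by auto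
  have Yz: "Y $$ (a,b) = 0" if "b < a" "a < p" for a b
    using Yu that Y unfolding upper_triangular_def by auto
  show "upper_triangular (E * Y)"
    unfolding upper_triangular_def
  proof (intro allI impI)
    fix i j assume i: "i < dim_row (E * Y)" and ji: "j < i"
    then have i: "i < p" using E by simp
    have "(E * Y) $$ (i,j) = (\<Sum>m<p. E $$ (i,m) * Y $$ (m,j))"
      using mat_mult_entry[OF E Y i] ji i by simp
    also have "\<dots> = 0"
    proof (intro sum.neutral ballI)
      fix m assume "m \<in> {..<p}"
      then show "E $$ (i,m) * Y $$ (m,j) = 0"
        using Ez[of m i] Yz[of j m] ji i by (cases "m < i") auto
    qed
    finally show "(E * Y) $$ (i,j) = 0" .
  qed
  fix i assume i: "i < p"
  have "(E * Y) $$ (i,i) = (\<Sum>m<p. E $$ (i,m) * Y $$ (m,i))"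
    using mat_mult_entry[OF E Y i i] .
  also have "\<dots> = E $$ (i,i) * Y $$ (i,i) + (\<Sum>m\<in>{..<p} - {i}. E $$ (i,m) * Y $$ (m,i))"
    using i by (subst sum.remove[of _ i]) auto
  also have "(\<Sum>m\<in>{..<p} - {i}. E $$ (i,m) * Y $$ (m,i)) = 0"
  proof (intro sum.neutral ballI)
    fix m assume m: "m \<in> {..<p} - {i}"
    then show "E $$ (i,m) * Y $$ (m,i) = 0"
      using Ez[of m i] Yz[of i m] i by (cases "m < i") auto
  qed
  finally show "(E * Y) $$ (i,i) = E $$ (i,i) * Y $$ (i,i)" by simp
qed


lemma deriv_algebra:
  fixes Q D A1 R E Y :: "complex mat"
  assumes Q: "Q \<in> carrier_mat n p" and D: "D \<in> carrier_mat n p" and A1: "A1 \<in> carrier_mat n p"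
    and R: "R \<in> carrier_mat p p" and E: "E \<in> carrier_mat p p" and Y: "Y \<in> carrier_mat p p"
    and QQ: "adj Q * Q = 1\<^sub>m p"
    and skew: "adj Q * D + adj D * Q = 0\<^sub>m p p"
    and dec: "D * R + Q * E = A1"
    and Eu: "upper_triangular E" and Ed: "\<And>i. i < p \<Longrightarrow> Im (E $$ (i,i)) = 0"
    and Ru: "upper_triangular R" and Rnz: "\<And>i. i < p \<Longrightarrow> R $$ (i,i) \<noteq> 0"
    and Rd: "\<And>i. i < p \<Longrightarrow> Im (R $$ (i,i)) = 0"
    and RY: "R * Y = 1\<^sub>m p"
  shows "D = Q * Pskew (adj Q * (A1 * Y)) + (1\<^sub>m n - Q * adj Q) * (A1 * Y)"
proof -
  define \<Omega> where "\<Omega> = adj Q * D"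
  have aQ: "adj Q \<in> carrier_mat p n" using Q by simp
  have aD: "adj D \<in> carrier_mat p n" using D by simp
  have cO: "\<Omega> \<in> carrier_mat p p" using aQ D by (simp add: \<Omega>_def)
  have adjO: "adj \<Omega> = adj D * Q" unfolding \<Omega>_def using adj_mult[OF aQ D] adj_adj by simp
  have sk: "\<Omega> $$ (i,j) = - cnj (\<Omega> $$ (j,i))" if i: "i < p" and j: "j < p" for i j
  proof -
    have "(\<Omega> + adj \<Omega>) $$ (i,j) = 0" using skew adjO i j unfolding \<Omega>_def by simp
    then have "\<Omega> $$ (i,j) + cnj (\<Omega> $$ (j,i)) = 0" using i j cO by simp
    then show ?thesis by (simp add: eq_neg_iff_add_eq_0)
  qed
  have Yu1: "upper_triangular Y" by (rule upper_inverse(1)[OF R Y Ru _ RY]) (rule Rnz)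
  have Yu2: "Y $$ (i,i) = inverse (R $$ (i,i))" if "i < p" for i
    by (rule upper_inverse(2)[OF R Y Ru _ RY that]) (rule Rnz)
  have EY: "E * Y \<in> carrier_mat p p" using E Y by simp
  have EYu: "upper_triangular (E * Y)" using upper_mult(1)[OF E Y Eu Yu1] .
  have EYd: "Im ((E * Y) $$ (i,i)) = 0" if i: "i < p" for i
  proof -
    have "(E * Y) $$ (i,i) = E $$ (i,i) * inverse (R $$ (i,i))"
      using upper_mult(2)[OF E Y Eu Yu1 i] Yu2[OF i] by simp
    then show ?thesis using Ed[OF i] Rd[OF i] by (simp add: Im_divide power2_eq_square)
  qed
  have AY: "A1 * Y = D + Q * (E * Y)"
  proof -
    have "A1 * Y = (D * R + Q * E) * Y" using dec by simp
    also have "\<dots> = D * R * Y + Q * E * Y"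
      by (rule add_mult_distrib_mat[of _ n p]) (use D R Q E Y in auto)
    also have "D * R * Y = D * (R * Y)" using assoc_mult_mat[OF D R Y] .
    also have "\<dots> = D" using RY D by simp
    also have "Q * E * Y = Q * (E * Y)" using assoc_mult_mat[OF Q E Y] .
    finally show ?thesis .
  qed
  have B: "adj Q * (A1 * Y) = \<Omega> + E * Y"
  proof -
    have "adj Q * (A1 * Y) = adj Q * D + adj Q * (Q * (E * Y))"
      unfolding AY by (rule mult_add_distrib_mat[of _ p n]) (use aQ D Q EY in auto)
    also have "adj Q * (Q * (E * Y)) = (adj Q * Q) * (E * Y)" using assoc_mult_mat[OF aQ Q EY] by simp
    also have "\<dots> = E * Y" using QQ left_mult_one_mat[OF EY] by simp
    finally show ?thesis unfolding \<Omega>_def .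
  qed
  have PS: "Pskew (adj Q * (A1 * Y)) = \<Omega>"
    unfolding B by (rule Pskew_skew_upper[OF cO EY sk EYu EYd])
  have IQ: "(1\<^sub>m n - Q * adj Q) * Q = 0\<^sub>m n p"
  proof -
    have "(1\<^sub>m n - Q * adj Q) * Q = 1\<^sub>m n * Q - Q * adj Q * Q"
      by (rule minus_mult_distrib_mat[of _ n n]) (use Q aQ in auto)
    also have "Q * adj Q * Q = Q * (adj Q * Q)" using assoc_mult_mat[OF Q aQ Q] .
    also have "\<dots> = Q" using QQ Q by simp
    finally show ?thesis using Q by simp
  qed
  have cP: "1\<^sub>m n - Q * adj Q \<in> carrier_mat n n" using Q aQ by (simp add: minus_carrier_mat)
  have T2: "(1\<^sub>m n - Q * adj Q) * (A1 * Y) = D - Q * \<Omega>"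
  proof -
    have "(1\<^sub>m n - Q * adj Q) * (A1 * Y) = (1\<^sub>m n - Q * adj Q) * D + (1\<^sub>m n - Q * adj Q) * (Q * (E * Y))"
      unfolding AY by (rule mult_add_distrib_mat[of _ n n]) (use cP D Q EY in auto)
    also have "(1\<^sub>m n - Q * adj Q) * (Q * (E * Y)) = ((1\<^sub>m n - Q * adj Q) * Q) * (E * Y)"
      using assoc_mult_mat[OF cP Q EY] by simp
    also have "\<dots> = 0\<^sub>m n p" using IQ left_mult_zero_mat[OF EY] by simp
    also have "(1\<^sub>m n - Q * adj Q) * D = 1\<^sub>m n * D - Q * adj Q * D"
      by (rule minus_mult_distrib_mat[of _ n n]) (use Q aQ D in auto)
    also have "Q * adj Q * D = Q * \<Omega>" unfolding \<Omega>_def using assoc_mult_mat[OF Q aQ D] .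
    finally show ?thesis using D Q cO right_add_zero_mat[of "D - Q * \<Omega>" n p]
      by (simp add: minus_carrier_mat)
  qed
  show ?thesis unfolding PS T2
  proof (rule eq_matI)
    fix i j assume "i < dim_row (Q * \<Omega> + (D - Q * \<Omega>))" "j < dim_col (Q * \<Omega> + (D - Q * \<Omega>))"
    then have "i < n" "j < p" using Q cO D by auto
    then show "D $$ (i,j) = (Q * \<Omega> + (D - Q * \<Omega>)) $$ (i,j)" using Q cO D by simp
  qed (use Q cO D in auto)
qed



lemma vd_unique:
  fixes f :: "real \<Rightarrow> complex"
  assumes "(f has_vector_derivative a) (at 0)" "(f has_vector_derivative b) (at 0)"
  shows "a = b"
proof -
  have "Re a = Re b" using DERIV_unique has_field_derivative_Re assms by blast
  moreover have "Im a = Im b" using DERIV_unique has_field_derivative_Im assms by blast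
  ultimately show ?thesis by (simp add: complex_eq_iff)
qed

lemma vd_ev:
  fixes f g :: "real \<Rightarrow> complex"
  assumes ev: "eventually (\<lambda>t. f t = g t) (nhds 0)" and d: "(f has_vector_derivative a) (at 0)"
  shows "(g has_vector_derivative a) (at 0)"
proof -
  have evR: "eventually (\<lambda>t. Re (f t) = Re (g t)) (nhds 0)" using ev by (rule eventually_mono) simp
  have evI: "eventually (\<lambda>t. Im (f t) = Im (g t)) (nhds 0)" using ev by (rule eventually_mono) simp
  have "((\<lambda>t. Re (g t)) has_field_derivative Re a) (at 0)"
    using DERIV_cong_ev[OF refl evR refl] has_field_derivative_Re[OF d] by simp
  moreover have "((\<lambda>t. Im (g t)) has_field_derivative Im a) (at 0)"
    using DERIV_cong_ev[OF refl evI refl] has_field_derivative_Im[OF d] by simp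
  ultimately show ?thesis by (simp add: has_vector_derivative_complex_iff)
qed

lemma vd_ev_const:
  fixes f :: "real \<Rightarrow> complex"
  assumes ev: "eventually (\<lambda>t. f t = c) (nhds 0)" and d: "(f has_vector_derivative a) (at 0)"
  shows "a = 0"
proof -
  have "((\<lambda>t. c) has_vector_derivative a) (at 0)" by (rule vd_ev[OF ev d])
  then show ?thesis using vd_unique has_vector_derivative_const by blast
qed

lemma vd_ev_Im0:
  fixes f :: "real \<Rightarrow> complex"
  assumes ev: "eventually (\<lambda>t. Im (f t) = 0) (nhds 0)" and d: "(f has_vector_derivative a) (at 0)"
  shows "Im a = 0"
proof -
  have "((\<lambda>t. Im (f t)) has_field_derivative Im a) (at 0)" by (rule has_field_derivative_Im[OF d])
  then have "((\<lambda>t. 0) has_field_derivative Im a) (at 0)" using DERIV_cong_ev[OF refl ev refl] by simp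
  then show ?thesis using DERIV_unique DERIV_const by blast
qed

lemma gs_decomp_full:
  assumes pos: "\<And>m. m < p \<Longrightarrow> vnorm n (gsw n a m) > 0" and j: "j < p" and i: "i < n"
  shows "a i j = (\<Sum>m<p. gsq n a m i * ip n (gsq n a m) (\<lambda>r. a r j))"
proof -
  have "a i j = (\<Sum>m<Suc j. ip n (gsq n a m) (\<lambda>r. a r j) * gsq n a m i)"
    by (rule gs_decomp(1)[OF pos j i])
  also have "\<dots> = (\<Sum>m<p. ip n (gsq n a m) (\<lambda>r. a r j) * gsq n a m i)"
    by (rule sum.mono_neutral_left) (use j gs_upper[OF pos j] in auto)
  finally show ?thesis by (simp add: mult.commute)
qed


definition ent :: "complex mat \<Rightarrow> nat \<Rightarrow> nat \<Rightarrow> complex" where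
  "ent M = (\<lambda>i j. M $$ (i,j))"

definition gsQ :: "nat \<Rightarrow> nat \<Rightarrow> (nat \<Rightarrow> nat \<Rightarrow> complex) \<Rightarrow> complex mat" where
  "gsQ n p a = mat n p (\<lambda>(i,m). gsq n a m i)"

definition gsR :: "nat \<Rightarrow> nat \<Rightarrow> (nat \<Rightarrow> nat \<Rightarrow> complex) \<Rightarrow> complex mat" where
  "gsR n p a = mat p p (\<lambda>(m,j). ip n (gsq n a m) (\<lambda>r. a r j))"

lemma mat_ent: "M \<in> carrier_mat n p \<Longrightarrow> mat n p (\<lambda>(i,j). ent M i j) = M"
  by (rule eq_matI) (auto simp: ent_def)

lemma gsQ_carrier[simp]: "gsQ n p a \<in> carrier_mat n p" by (simp add: gsQ_def)
lemma gsQ_dims[simp]: "dim_row (gsQ n p a) = n" "dim_col (gsQ n p a) = p" by (simp_all add: gsQ_def)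
lemma gsR_dims[simp]: "dim_row (gsR n p a) = p" "dim_col (gsR n p a) = p" by (simp_all add: gsR_def)
lemma gsR_carrier[simp]: "gsR n p a \<in> carrier_mat p p" by (simp add: gsR_def)

lemma gs_qr_mat:
  assumes pos: "\<And>m. m < p \<Longrightarrow> vnorm n (gsw n a m) > 0"
  shows "adj (gsQ n p a) * gsQ n p a = 1\<^sub>m p"
    and "gsQ n p a * gsR n p a = mat n p (\<lambda>(i,j). a i j)"
    and "adj (gsQ n p a) * mat n p (\<lambda>(i,j). a i j) = gsR n p a"
    and "upper_triangular (gsR n p a)"
    and "\<And>j. j < p \<Longrightarrow> gsR n p a $$ (j,j) = of_real (vnorm n (gsw n a j))"
proof -
  show "adj (gsQ n p a) * gsQ n p a = 1\<^sub>m p"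
  proof (rule eq_matI)
    fix i j assume "i < dim_row (1\<^sub>m p :: complex mat)" "j < dim_col (1\<^sub>m p :: complex mat)"
    then have i: "i < p" and j: "j < p" by auto
    have "(adj (gsQ n p a) * gsQ n p a) $$ (i,j) = ip n (gsq n a i) (gsq n a j)"
      using i j mat_mult_entry[OF adj_carrier[OF gsQ_carrier] gsQ_carrier i j] by (simp add: gsQ_def ip_def)
    then show "(adj (gsQ n p a) * gsQ n p a) $$ (i,j) = (1\<^sub>m p :: complex mat) $$ (i,j)"
      using gs_orth[OF pos i j] i j by simp
  qed auto
  show "gsQ n p a * gsR n p a = mat n p (\<lambda>(i,j). a i j)"
  proof (rule eq_matI)
    fix i j assume "i < dim_row (mat n p (\<lambda>(i,j). a i j))" "j < dim_col (mat n p (\<lambda>(i,j). a i j))"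
    then have i: "i < n" and j: "j < p" by auto
    have "(gsQ n p a * gsR n p a) $$ (i,j) = (\<Sum>m<p. gsq n a m i * ip n (gsq n a m) (\<lambda>r. a r j))"
      using i j mat_mult_entry[OF gsQ_carrier gsR_carrier i j] by (simp add: gsQ_def gsR_def)
    then show "(gsQ n p a * gsR n p a) $$ (i,j) = mat n p (\<lambda>(i,j). a i j) $$ (i,j)"
      using gs_decomp_full[OF pos j i] i j by simp
  qed auto
  show "adj (gsQ n p a) * mat n p (\<lambda>(i,j). a i j) = gsR n p a"
  proof (rule eq_matI)
    fix i j assume "i < dim_row (gsR n p a)" "j < dim_col (gsR n p a)"
    then have i: "i < p" and j: "j < p" by (auto simp: gsR_def)
    show "(adj (gsQ n p a) * mat n p (\<lambda>(i,j). a i j)) $$ (i,j) = gsR n p a $$ (i,j)"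
      using i j mat_mult_entry[OF adj_carrier[OF gsQ_carrier[of n p a]] mat_carrier[of n p "\<lambda>(i,j). a i j"] i j] by (simp add: gsQ_def gsR_def ip_def)
  qed (auto simp: gsR_def)
  show "upper_triangular (gsR n p a)"
    unfolding upper_triangular_def using gs_upper[OF pos] by (auto simp: gsR_def)
  fix j assume j: "j < p"
  show "gsR n p a $$ (j,j) = of_real (vnorm n (gsw n a j))"
    using gs_decomp(2)[OF pos j] j
    by (cases "n = 0") (auto simp: gsR_def ip_def vnorm_def)
qed

lemma gs_unique_mat:
  assumes Q: "Q \<in> carrier_mat n p" and R: "R \<in> carrier_mat p p"
    and QQ: "adj Q * Q = 1\<^sub>m p" and Ru: "upper_triangular R"
    and Rd: "\<And>j. j < p \<Longrightarrow> Im (R $$ (j,j)) = 0 \<and> Re (R $$ (j,j)) > 0"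
    and QR: "Q * R = M" and M: "M \<in> carrier_mat n p"
  shows "\<And>m. m < p \<Longrightarrow> vnorm n (gsw n (ent M) m) > 0" and "Q = gsQ n p (ent M)"
proof -
  have orth: "ip n (\<lambda>r. Q $$ (r,m)) (\<lambda>r. Q $$ (r,m')) = (if m = m' then 1 else 0)"
    if "m < p" "m' < p" for m m'
  proof -
    have "(adj Q * Q) $$ (m,m') = ip n (\<lambda>r. Q $$ (r,m)) (\<lambda>r. Q $$ (r,m'))"
      using that Q mat_mult_entry[OF adj_carrier[OF Q] Q that] by (simp add: ip_def)
    then show ?thesis using QQ that by simp
  qed
  have dec: "ent M i j = (\<Sum>m<p. Q $$ (i,m) * R $$ (m,j))" if "i < n" "j < p" for i j
    using QR that Q R by (auto simp: ent_def mat_mult_entry[OF Q R])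
  have up: "R $$ (m,j) = 0" if "m < p" "j < m" for m j
    using Ru that R unfolding upper_triangular_def by auto
  note U = gs_unique[where Qf="\<lambda>i m. Q $$ (i,m)" and Rf="\<lambda>m j. R $$ (m,j)" and a="ent M", OF orth dec up Rd]
  show "\<And>m. m < p \<Longrightarrow> vnorm n (gsw n (ent M) m) > 0" using U by blast
  show "Q = gsQ n p (ent M)"
    by (rule eq_matI) (use U Q in \<open>auto simp: gsQ_def\<close>)
qed

lemma gsq_cong:
  assumes ab: "\<And>i j. i < n \<Longrightarrow> j < p \<Longrightarrow> a i j = b i j"
  shows "j < p \<Longrightarrow> \<forall>i<n. gsq n a j i = gsq n b j i"
proof (induction j rule: less_induct)
  case (less j)
  have IH: "\<And>m i. m < j \<Longrightarrow> i < n \<Longrightarrow> gsq n a m i = gsq n b m i" using less by auto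
  have w: "gsw n a j i = gsw n b j i" if i: "i < n" for i
  proof -
    have "ip n (gsq n a m) (\<lambda>r. a r j) = ip n (gsq n b m) (\<lambda>r. b r j)" if "m < j" for m
      by (rule ip_cong2) (use IH that ab less.prems in auto)
    then show ?thesis unfolding gsw_def using IH i ab less.prems by simp
  qed
  have "vnorm n (gsw n a j) = vnorm n (gsw n b j)" by (rule vnorm_cong) (use w in auto)
  then show ?case using w by (simp add: gsq_eq)
qed



lemma vd_apar: "((\<lambda>t. apar a0 a1 t r j) has_vector_derivative a1 r j) (at 0)"
proof -
  have "((\<lambda>t. of_real t :: complex) has_vector_derivative 1) (at 0)"
    using has_vector_derivative_of_real[OF DERIV_ident] by simp
  then have "((\<lambda>t. of_real t * a1 r j) has_vector_derivative 1 * a1 r j) (at 0)"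
    by (rule has_vector_derivative_mult_left)
  then have "((\<lambda>t. a0 r j + of_real t * a1 r j) has_vector_derivative 0 + 1 * a1 r j) (at 0)"
    by (intro has_vector_derivative_add has_vector_derivative_const)
  then show ?thesis by (simp add: apar_def)
qed

lemma slice_deriv:
  fixes M0 M1 Y :: "complex mat"
  assumes M0: "M0 \<in> carrier_mat n p" and M1: "M1 \<in> carrier_mat n p"
    and pos0: "\<And>m. m < p \<Longrightarrow> vnorm n (gsw n (ent M0) m) > 0"
    and Y: "Y \<in> carrier_mat p p" and RY: "(adj (gsQ n p (ent M0)) * M0) * Y = 1\<^sub>m p"
    and i: "i < n" and m: "m < p"
  shows "((\<lambda>t. gsq n (apar (ent M0) (ent M1) t) m i) has_vector_derivative
     (gsQ n p (ent M0) * Pskew (adj (gsQ n p (ent M0)) * (M1 * Y)) +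
      (1\<^sub>m n - gsQ n p (ent M0) * adj (gsQ n p (ent M0))) * (M1 * Y)) $$ (i,m)) (at 0)"
proof -
  define a0 where "a0 = ent M0"
  define a1 where "a1 = ent M1"
  define q where "q = (\<lambda>t m i. gsq n (apar a0 a1 t) m i)"
  have q0: "q 0 = gsq n a0" by (simp add: q_def apar0)
  have cdq: "cvd (\<lambda>t. q t m i)" if "m < p" for m i
    using gs_param_cd[OF pos0 that, where ?a1.0=a1] unfolding q_def a0_def by blast
  define D where "D = (\<lambda>i m. SOME d. ((\<lambda>t. q t m i) has_vector_derivative d) (at 0))"
  have dq: "((\<lambda>t. q t m i) has_vector_derivative D i m) (at 0)" if "m < p" for m i
    using cdq[OF that, of i] unfolding cvd_def D_def by (rule someI_ex)
  define E where "E = (\<lambda>m j. \<Sum>r<n. cnj (q 0 m r) * a1 r j + cnj (D r m) * a0 r j)"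
  have dip: "((\<lambda>t. ip n (q t m) (\<lambda>r. apar a0 a1 t r j)) has_vector_derivative E m j) (at 0)"
    if "m < p" for m j
  proof -
    have "((\<lambda>t. \<Sum>r<n. cnj (q t m r) * apar a0 a1 t r j) has_vector_derivative
        (\<Sum>r<n. cnj (q 0 m r) * a1 r j + cnj (D r m) * apar a0 a1 0 r j)) (at 0)"
      by (intro has_vector_derivative_sum has_vector_derivative_mult has_vector_derivative_cnj dq[OF that] vd_apar)
    then show ?thesis by (simp add: ip_def E_def apar0)
  qed
  have ev: "eventually (\<lambda>t. \<forall>m<p. vnorm n (gsw n (apar a0 a1 t) m) > 0) (nhds 0)"
    using gs_param_ev[OF pos0, where ?a1.0=a1] unfolding a0_def .
  have E1: "(\<Sum>r<n. cnj (q 0 m r) * D r m' + cnj (D r m) * q 0 m' r) = 0"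
    if mm: "m < p" "m' < p" for m m'
  proof -
    have d: "((\<lambda>t. ip n (q t m) (q t m')) has_vector_derivative
        (\<Sum>r<n. cnj (q 0 m r) * D r m' + cnj (D r m) * q 0 m' r)) (at 0)"
      unfolding ip_def
      by (intro has_vector_derivative_sum has_vector_derivative_mult has_vector_derivative_cnj dq mm)
    have "eventually (\<lambda>t. ip n (q t m) (q t m') = (if m = m' then 1 else 0)) (nhds 0)"
    proof (rule eventually_mono[OF ev])
      fix t assume "\<forall>m<p. vnorm n (gsw n (apar a0 a1 t) m) > 0"
      then have P: "\<And>m. m < p \<Longrightarrow> vnorm n (gsw n (apar a0 a1 t) m) > 0" by blast
      show "ip n (q t m) (q t m') = (if m = m' then 1 else 0)" using gs_orth[OF P mm] by (simp add: q_def)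
    qed
    then show ?thesis by (rule vd_ev_const[OF _ d])
  qed
  have E2: "a1 i j = (\<Sum>m<p. q 0 m i * E m j + D i m * ip n (q 0 m) (\<lambda>r. a0 r j))"
    if ij: "i < n" "j < p" for i j
  proof -
    have d: "((\<lambda>t. \<Sum>m<p. q t m i * ip n (q t m) (\<lambda>r. apar a0 a1 t r j)) has_vector_derivative
        (\<Sum>m<p. q 0 m i * E m j + D i m * ip n (q 0 m) (\<lambda>r. apar a0 a1 0 r j))) (at 0)"
      by (intro has_vector_derivative_sum has_vector_derivative_mult dq dip) auto
    have "eventually (\<lambda>t. (\<Sum>m<p. q t m i * ip n (q t m) (\<lambda>r. apar a0 a1 t r j)) = apar a0 a1 t i j) (nhds 0)"
    proof (rule eventually_mono[OF ev])
      fix t assume "\<forall>m<p. vnorm n (gsw n (apar a0 a1 t) m) > 0"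
      then have P: "\<And>m. m < p \<Longrightarrow> vnorm n (gsw n (apar a0 a1 t) m) > 0" by blast
      show "(\<Sum>m<p. q t m i * ip n (q t m) (\<lambda>r. apar a0 a1 t r j)) = apar a0 a1 t i j"
        using gs_decomp_full[OF P ij(2) ij(1)] by (simp add: q_def)
    qed
    from vd_ev[OF this d] have "((\<lambda>t. apar a0 a1 t i j) has_vector_derivative
        (\<Sum>m<p. q 0 m i * E m j + D i m * ip n (q 0 m) (\<lambda>r. apar a0 a1 0 r j))) (at 0)" .
    then show ?thesis using vd_unique vd_apar by (simp add: apar0) blast
  qed
  have E3: "E m j = 0" if "m < p" "j < m" for m j
  proof -
    have "eventually (\<lambda>t. ip n (q t m) (\<lambda>r. apar a0 a1 t r j) = 0) (nhds 0)"
    proof (rule eventually_mono[OF ev])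
      fix t assume "\<forall>m<p. vnorm n (gsw n (apar a0 a1 t) m) > 0"
      then have P: "\<And>m. m < p \<Longrightarrow> vnorm n (gsw n (apar a0 a1 t) m) > 0" by blast
      show "ip n (q t m) (\<lambda>r. apar a0 a1 t r j) = 0"
        using gs_upper[OF P _ that(1) that(2)] that by (simp add: q_def)
    qed
    then show ?thesis by (rule vd_ev_const[OF _ dip[OF that(1)]])
  qed
  have E4: "Im (E j j) = 0" if "j < p" for j
  proof -
    have "eventually (\<lambda>t. Im (ip n (q t j) (\<lambda>r. apar a0 a1 t r j)) = 0) (nhds 0)"
    proof (rule eventually_mono[OF ev])
      fix t assume "\<forall>m<p. vnorm n (gsw n (apar a0 a1 t) m) > 0"
      then have P: "\<And>m. m < p \<Longrightarrow> vnorm n (gsw n (apar a0 a1 t) m) > 0" by blast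
      show "Im (ip n (q t j) (\<lambda>r. apar a0 a1 t r j)) = 0"
      proof (cases "n = 0")
        case True then show ?thesis by (simp add: ip_def)
      next
        case False
        then show ?thesis using gs_decomp(2)[OF P that, of 0] by (simp add: q_def)
      qed
    qed
    then show ?thesis by (rule vd_ev_Im0[OF _ dip[OF that]])
  qed
  define Q0 where "Q0 = gsQ n p a0"
  define R0 where "R0 = gsR n p a0"
  define Dm where "Dm = mat n p (\<lambda>(i,m). D i m)"
  define Em where "Em = mat p p (\<lambda>(m,j). E m j)"
  have pos0': "\<And>m. m < p \<Longrightarrow> vnorm n (gsw n a0 m) > 0" using pos0 by (simp add: a0_def)
  have QR1: "adj (gsQ n p a0) * gsQ n p a0 = 1\<^sub>m p" by (rule gs_qr_mat(1)) (rule pos0')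
  have QR3: "adj (gsQ n p a0) * mat n p (\<lambda>(i,j). a0 i j) = gsR n p a0" by (rule gs_qr_mat(3)) (rule pos0')
  have QR4: "upper_triangular (gsR n p a0)" by (rule gs_qr_mat(4)) (rule pos0')
  have QR5: "gsR n p a0 $$ (j,j) = of_real (vnorm n (gsw n a0 j))" if "j < p" for j
    by (rule gs_qr_mat(5)[OF _ that]) (rule pos0')
  have cQ: "Q0 \<in> carrier_mat n p" and cR: "R0 \<in> carrier_mat p p" and cD: "Dm \<in> carrier_mat n p"
    and cE: "Em \<in> carrier_mat p p" by (auto simp: Q0_def R0_def Dm_def Em_def)
  have Q0e: "Q0 $$ (i,m) = q 0 m i" if "i < n" "m < p" for i m using that by (simp add: Q0_def gsQ_def q0)
  have R0e: "R0 $$ (m,j) = ip n (q 0 m) (\<lambda>r. a0 r j)" if "m < p" "j < p" for m j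
    using that by (simp add: R0_def gsR_def q0)
  have skew: "adj Q0 * Dm + adj Dm * Q0 = 0\<^sub>m p p"
  proof (rule eq_matI)
    fix x y assume "x < dim_row (0\<^sub>m p p :: complex mat)" "y < dim_col (0\<^sub>m p p :: complex mat)"
    then have x: "x < p" and y: "y < p" by auto
    have "(adj Q0 * Dm + adj Dm * Q0) $$ (x,y) = (\<Sum>r<n. cnj (q 0 x r) * D r y) + (\<Sum>r<n. cnj (D r x) * q 0 y r)"
      using x y mat_mult_entry[OF adj_carrier[OF cQ] cD x y] mat_mult_entry[OF adj_carrier[OF cD] cQ x y] cQ cD
      by (simp add: Q0e Dm_def)
    also have "\<dots> = 0" using E1[OF x y] by (simp add: sum.distrib)
    finally show "(adj Q0 * Dm + adj Dm * Q0) $$ (x,y) = (0\<^sub>m p p :: complex mat) $$ (x,y)" using x y by simp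
  qed (use cQ cD in auto)
  have dec: "Dm * R0 + Q0 * Em = M1"
  proof (rule eq_matI)
    fix x y assume "x < dim_row M1" "y < dim_col M1"
    then have x: "x < n" and y: "y < p" using M1 by auto
    have "(Dm * R0 + Q0 * Em) $$ (x,y) = (\<Sum>m<p. D x m * R0 $$ (m,y)) + (\<Sum>m<p. Q0 $$ (x,m) * E m y)"
      using x y mat_mult_entry[OF cD cR x y] mat_mult_entry[OF cQ cE x y] cQ cD
      by (simp add: Dm_def Em_def)
    also have "\<dots> = (\<Sum>m<p. q 0 m x * E m y + D x m * ip n (q 0 m) (\<lambda>r. a0 r y))"
      using y x by (simp add: sum.distrib R0e Q0e add.commute)
    also have "\<dots> = M1 $$ (x,y)" using E2[OF x y] by (simp add: a1_def ent_def)
    finally show "(Dm * R0 + Q0 * Em) $$ (x,y) = M1 $$ (x,y)" .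
  qed (use cD cR cQ cE M1 in auto)
  have Eu: "upper_triangular Em" unfolding upper_triangular_def using E3 by (auto simp: Em_def)
  have Ed: "Im (Em $$ (j,j)) = 0" if "j < p" for j using E4 that by (simp add: Em_def)
  have Ru: "upper_triangular R0" using QR4 by (simp add: R0_def)
  have Rnz: "R0 $$ (j,j) \<noteq> 0" and Rd: "Im (R0 $$ (j,j)) = 0" if "j < p" for j
    using QR5[OF that] pos0'[OF that] by (simp_all add: R0_def)
  have RY': "R0 * Y = 1\<^sub>m p"
  proof -
    have "R0 = adj Q0 * M0" using QR3 mat_ent[OF M0] by (simp add: R0_def Q0_def a0_def)
    then show ?thesis using RY by (simp add: Q0_def a0_def)
  qed
  have "Dm = Q0 * Pskew (adj Q0 * (M1 * Y)) + (1\<^sub>m n - Q0 * adj Q0) * (M1 * Y)"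
    by (rule deriv_algebra[OF cQ cD M1 cR cE Y QR1[folded Q0_def] skew dec Eu Ed Ru Rnz Rd RY'])
  then have "D i m = (Q0 * Pskew (adj Q0 * (M1 * Y)) + (1\<^sub>m n - Q0 * adj Q0) * (M1 * Y)) $$ (i,m)"
    using i m by (metis Dm_def index_mat(1) prod.simps(2))
  then show ?thesis using dq[OF m, of i] by (simp add: q_def a0_def a1_def Q0_def)
qed



lemma upper_invertible:
  fixes R :: "complex mat"
  assumes R: "R \<in> carrier_mat p p" and ut: "upper_triangular R" and nz: "\<And>i. i < p \<Longrightarrow> R $$ (i,i) \<noteq> 0"
  shows "\<exists>Y. Y \<in> carrier_mat p p \<and> R * Y = 1\<^sub>m p \<and> Y * R = 1\<^sub>m p"
proof -
  have "det R = prod_list (diag_mat R)" by (rule det_upper_triangular[OF ut R])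
  also have "\<dots> \<noteq> 0" using nz R by (auto simp: prod_list_zero_iff diag_mat_def)
  finally have "R \<in> Units (ring_mat TYPE(complex) p ())" by (rule det_non_zero_imp_unit[OF R])
  then show ?thesis by (auto simp: Units_def ring_mat_def)
qed

lemma gsw_cong:
  assumes ab: "\<And>i j. i < n \<Longrightarrow> j < p \<Longrightarrow> a i j = b i j" and j: "j < p" and i: "i < n"
  shows "gsw n a j i = gsw n b j i"
proof -
  have q: "\<And>m i. m < j \<Longrightarrow> i < n \<Longrightarrow> gsq n a m i = gsq n b m i" using gsq_cong[OF ab] j by auto
  have "ip n (gsq n a m) (\<lambda>r. a r j) = ip n (gsq n b m) (\<lambda>r. b r j)" if "m < j" for m
    by (rule ip_cong2) (use q that ab j in auto)
  then show ?thesis unfolding gsw_def using q i ab j by simp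
qed

lemma vnorm_gsw_cong:
  assumes ab: "\<And>i j. i < n \<Longrightarrow> j < p \<Longrightarrow> a i j = b i j" and j: "j < p"
  shows "vnorm n (gsw n a j) = vnorm n (gsw n b j)"
  by (rule vnorm_cong) (rule gsw_cong[OF ab j])

lemma vnorm_zero: "vnorm n w = 0 \<Longrightarrow> r < n \<Longrightarrow> w r = 0"
proof -
  assume v: "vnorm n w = 0" and r: "r < n"
  have "(\<Sum>r<n. (cmod (w r))\<^sup>2) = 0" using v by (simp add: vnorm_def sum_nonneg)
  then have "\<forall>r\<in>{..<n}. (cmod (w r))\<^sup>2 = 0" by (subst (asm) sum_nonneg_eq_0_iff) auto
  then show "w r = 0" using r by simp
qed

lemma gs_pos_of_inj:
  fixes a :: "nat \<Rightarrow> nat \<Rightarrow> complex"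
  assumes inj: "\<And>x. (\<forall>i<n. (\<Sum>m<p. a i m * x m) = 0) \<Longrightarrow> (\<forall>m<p. x m = 0)"
  shows "j < p \<Longrightarrow> vnorm n (gsw n a j) > 0"
proof (induction j rule: less_induct)
  case (less j)
  have posj: "\<And>m. m < j \<Longrightarrow> vnorm n (gsw n a m) > 0" using less by auto
  show ?case
  proof (rule ccontr)
    assume "\<not> vnorm n (gsw n a j) > 0"
    then have v0: "vnorm n (gsw n a j) = 0" using vnorm_nonneg[of n "gsw n a j"] by simp
    define Qj where "Qj = gsQ n j a"
    define Rj where "Rj = gsR n j a"
    define Aj where "Aj = mat n j (\<lambda>(i,m). a i m)"
    have cQ: "Qj \<in> carrier_mat n j" and cR: "Rj \<in> carrier_mat j j" and cA: "Aj \<in> carrier_mat n j"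
      by (auto simp: Qj_def Rj_def Aj_def)
    have QR: "Qj * Rj = Aj" unfolding Qj_def Rj_def Aj_def by (rule gs_qr_mat(2)) (rule posj)
    have Ru: "upper_triangular Rj" unfolding Rj_def by (rule gs_qr_mat(4)) (rule posj)
    have Rnz: "Rj $$ (m,m) \<noteq> 0" if "m < j" for m
      using gs_qr_mat(5)[OF posj that] posj[OF that] by (simp add: Rj_def)
    obtain Y where cY: "Y \<in> carrier_mat j j" and RY: "Rj * Y = 1\<^sub>m j"
      using upper_invertible[OF cR Ru Rnz] by blast
    have AY: "Aj * Y = Qj"
    proof -
      have "Aj * Y = Qj * Rj * Y" using QR by simp
      also have "\<dots> = Qj * (Rj * Y)" using assoc_mult_mat[OF cQ cR cY] .
      finally show ?thesis using RY cQ by simp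
    qed
    define c where "c = mat j 1 (\<lambda>(m,_). ip n (gsq n a m) (\<lambda>r. a r j))"
    have cc: "c \<in> carrier_mat j 1" by (simp add: c_def)
    define y where "y = Y * c"
    have cy: "y \<in> carrier_mat j 1" using cY cc by (simp add: y_def)
    have ajq: "a i j = (Qj * c) $$ (i,0)" if i: "i < n" for i
    proof -
      have "gsw n a j i = 0" using vnorm_zero[OF v0 i] .
      then have "a i j = (\<Sum>m<j. ip n (gsq n a m) (\<lambda>r. a r j) * gsq n a m i)" by (simp add: gsw_def)
      also have "\<dots> = (Qj * c) $$ (i,0)"
        using mat_mult_entry[OF cQ cc i] i by (simp add: Qj_def gsQ_def c_def mult.commute)
      finally show ?thesis .
    qed
    have Ay: "(Aj * y) $$ (i,0) = a i j" if i: "i < n" for i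
    proof -
      have "Aj * y = (Aj * Y) * c" unfolding y_def using assoc_mult_mat[OF cA cY cc] by simp
      then show ?thesis using AY ajq[OF i] by simp
    qed
    define x where "x = (\<lambda>m. if m < j then y $$ (m,0) else if m = j then -1 else 0)"
    have "\<forall>i<n. (\<Sum>m<p. a i m * x m) = 0"
    proof (intro allI impI)
      fix i assume i: "i < n"
      have "(\<Sum>m<p. a i m * x m) = (\<Sum>m<Suc j. a i m * x m)"
        by (rule sum.mono_neutral_right) (use less.prems in \<open>auto simp: x_def\<close>)
      also have "\<dots> = (\<Sum>m<j. a i m * y $$ (m,0)) - a i j" by (simp add: x_def)
      also have "(\<Sum>m<j. a i m * y $$ (m,0)) = (Aj * y) $$ (i,0)"
        using mat_mult_entry[OF cA cy i] i by (simp add: Aj_def)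
      finally show "(\<Sum>m<p. a i m * x m) = 0" using Ay[OF i] by simp
    qed
    then have "x j = 0" using inj less.prems by blast
    then show False by (simp add: x_def)
  qed
qed



lemma gs_cnj: "gsq n (\<lambda>i j. cnj (a i j)) m i = cnj (gsq n a m i) \<and> gsw n (\<lambda>i j. cnj (a i j)) m i = cnj (gsw n a m i)"
proof (induction m arbitrary: i rule: less_induct)
  case (less m)
  have IH: "\<And>m' i. m' < m \<Longrightarrow> gsq n (\<lambda>i j. cnj (a i j)) m' i = cnj (gsq n a m' i)" using less by blast
  have ipc: "ip n (gsq n (\<lambda>i j. cnj (a i j)) m') (\<lambda>r. cnj (a r m)) = cnj (ip n (gsq n a m') (\<lambda>r. a r m))"
    if "m' < m" for m'
    using IH[OF that] by (simp add: ip_def cnj_sum)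
  have w: "gsw n (\<lambda>i j. cnj (a i j)) m i = cnj (gsw n a m i)" for i
    unfolding gsw_def using ipc IH by (simp add: cnj_sum)
  have v: "vnorm n (gsw n (\<lambda>i j. cnj (a i j)) m) = vnorm n (gsw n a m)"
    unfolding vnorm_def using w by simp
  show ?case using w v by (simp add: gsq_eq)
qed

lemma inj_of_stiefel:
  fixes K U :: "nat \<Rightarrow> nat \<Rightarrow> complex"
  assumes kk: "\<And>a b. a < p \<Longrightarrow> b < p \<Longrightarrow> (\<Sum>r<n. cnj (K r a) * K r b) = (if a = b then 1 else 0)"
    and sk: "\<And>a b. a < p \<Longrightarrow> b < p \<Longrightarrow> (\<Sum>r<n. cnj (K r a) * U r b) + (\<Sum>r<n. cnj (U r a) * K r b) = 0"
    and hyp: "\<forall>i<n. (\<Sum>m<p. (K i m + U i m) * x m) = 0"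
  shows "\<forall>m<p. x m = 0"
proof -
  define S where "S = (\<lambda>a m. \<Sum>i<n. cnj (K i a) * U i m)"
  have row: "x a + (\<Sum>m<p. S a m * x m) = 0" if a: "a < p" for a
  proof -
    have "0 = (\<Sum>i<n. cnj (K i a) * (\<Sum>m<p. (K i m + U i m) * x m))" using hyp by simp
    also have "\<dots> = (\<Sum>m<p. x m * (\<Sum>i<n. cnj (K i a) * (K i m + U i m)))"
      by (rule sum_swap_mult)
    also have "\<dots> = (\<Sum>m<p. x m * ((if a = m then 1 else 0) + S a m))"
      by (intro sum.cong refl) (simp add: distrib_left sum.distrib kk[OF a] S_def)
    also have "\<dots> = x a + (\<Sum>m<p. S a m * x m)"
      using a sum_delta_mult(2)[OF a, of x 1] by (simp add: distrib_left sum.distrib mult.commute)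
    finally show ?thesis by simp
  qed
  have Sc: "cnj (S a m) = - S m a" if "a < p" "m < p" for a m
  proof -
    have "cnj (S a m) = (\<Sum>i<n. cnj (U i m) * K i a)" by (simp add: S_def cnj_sum mult.commute)
    also have "\<dots> = - S m a" using sk[OF that(2) that(1)] by (simp add: S_def eq_neg_iff_add_eq_0 add.commute)
    finally show ?thesis .
  qed
  define z where "z = (\<Sum>a<p. cnj (x a) * (\<Sum>m<p. S a m * x m))"
  have "cnj z = (\<Sum>a<p. x a * (\<Sum>m<p. - S m a * cnj (x m)))"
    unfolding z_def by (simp add: cnj_sum Sc)
  also have "\<dots> = (\<Sum>m<p. cnj (x m) * (\<Sum>a<p. - S m a * x a))"
    by (subst sum_swap_mult) (simp add: mult_ac)
  also have "\<dots> = - z" unfolding z_def by (simp add: sum_negf)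
  finally have zc: "cnj z = - z" .
  then have Rz: "Re z = 0" by (simp add: complex_eq_iff)
  have "(\<Sum>a<p. cnj (x a) * (x a + (\<Sum>m<p. S a m * x m))) = 0" using row by simp
  then have "(\<Sum>a<p. cnj (x a) * x a) + z = 0" by (simp add: z_def distrib_left sum.distrib)
  then have "Re (\<Sum>a<p. cnj (x a) * x a) = 0" using Rz by (metis plus_complex.sel(1) zero_complex.sel(1) add_0_right)
  moreover have "Re (\<Sum>a<p. cnj (x a) * x a) = (\<Sum>a<p. (cmod (x a))\<^sup>2)"
    by (simp add: Re_sum cmod_power2 power2_eq_square[symmetric])
  ultimately have "(\<Sum>a<p. (cmod (x a))\<^sup>2) = 0" by simp
  then have "\<forall>a\<in>{..<p}. (cmod (x a))\<^sup>2 = 0" by (subst (asm) sum_nonneg_eq_0_iff) auto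
  then show ?thesis by simp
qed



definition hat :: "real tensor \<Rightarrow> nat \<Rightarrow> complex mat" where
  "hat A k = tdft (cten A) ! k"

lemma hat_carrier: "is_tensor r c l A \<Longrightarrow> 0 < l \<Longrightarrow> k < l \<Longrightarrow> hat A k \<in> carrier_mat r c"
  unfolding hat_def by (rule tensorD[OF tdft_tensor(1)[OF cten_tensor(1)]])

lemma hat_prod:
  assumes A: "is_tensor r s l A" and B: "is_tensor s c l B" and l: "0 < l" and k: "k < l"
  shows "hat (A \<star> B) k = hat A k * hat B k"
  unfolding hat_def cten_tprod[OF A B l]
  by (rule tdft_tprod[OF cten_tensor(1)[OF A] cten_tensor(1)[OF B] l k])

lemma hat_trans:
  assumes A: "is_tensor r c l A" and l: "0 < l" and k: "k < l"
  shows "hat (ttrans A) k = adj (hat A k)"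
  unfolding hat_def by (rule tdft_ttrans[OF A l k])

lemma hat_add:
  assumes A: "is_tensor r c l A" and B: "is_tensor r c l B" and l: "0 < l" and k: "k < l"
  shows "hat (A \<oplus>\<^sub>t B) k = hat A k + hat B k"
  unfolding hat_def cten_tadd[OF A B] by (rule tdft_tadd[OF cten_tensor(1)[OF A] cten_tensor(1)[OF B] l k])

lemma hat_minus:
  assumes A: "is_tensor r c l A" and B: "is_tensor r c l B" and l: "0 < l" and k: "k < l"
  shows "hat (A \<ominus>\<^sub>t B) k = hat A k - hat B k"
  unfolding hat_def cten_tminus[OF A B] by (rule tdft_tminus[OF cten_tensor(1)[OF A] cten_tensor(1)[OF B] l k])

lemma hat_smult:
  assumes A: "is_tensor r c l A" and l: "0 < l" and k: "k < l"
  shows "hat (tsmult t A) k = of_real t \<cdot>\<^sub>m hat A k"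
  unfolding hat_def cten_tsmult[OF A] by (rule tdft_tsmult[OF cten_tensor(1)[OF A] l k])

lemma hat_tid: "0 < l \<Longrightarrow> k < l \<Longrightarrow> hat (tid n l) k = 1\<^sub>m n"
  unfolding hat_def cten_tid by (rule tdft_tid)

lemma zero_tensor: "is_tensor p q l (replicate l (0\<^sub>m p q))"
  by (simp add: is_tensor_def)

lemma hat_zero:
  assumes l: "0 < l" and k: "k < l"
  shows "hat (replicate l (0\<^sub>m p q)) k = 0\<^sub>m p q"
proof (rule eq_matI)
  have c: "hat (replicate l (0\<^sub>m p q)) k \<in> carrier_mat p q" by (rule hat_carrier[OF zero_tensor l k])
  fix i j assume "i < dim_row (0\<^sub>m p q :: complex mat)" "j < dim_col (0\<^sub>m p q :: complex mat)"
  then have i: "i < p" and j: "j < q" by auto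
  show "hat (replicate l (0\<^sub>m p q)) k $$ (i,j) = (0\<^sub>m p q :: complex mat) $$ (i,j)"
    unfolding hat_def using tdft_tensor(2)[OF cten_tensor(1)[OF zero_tensor] l k i j] i j
    by (simp add: cten_tensor(2)[OF zero_tensor _ i j])
qed (use hat_carrier[OF zero_tensor l k] in auto)

lemma ctdft_inj:
  fixes A B :: "complex tensor"
  assumes A: "is_tensor r c l A" and B: "is_tensor r c l B" and l: "0 < l"
    and e: "\<And>k. k < l \<Longrightarrow> tdft A ! k = tdft B ! k"
  shows "A = B"
proof -
  have "tdft A = tdft B"
    using e tensor_len[OF tdft_tensor(1)[OF A l]] tensor_len[OF tdft_tensor(1)[OF B l]]
    by (intro nth_equalityI) auto
  then show ?thesis using tidft_tdft[OF A l] tidft_tdft[OF B l] by metis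
qed

lemma hat_inj:
  assumes A: "is_tensor r c l A" and B: "is_tensor r c l B" and l: "0 < l"
    and e: "\<And>k. k < l \<Longrightarrow> hat A k = hat B k"
  shows "A = B"
  by (rule cten_inj[OF A B ctdft_inj[OF cten_tensor(1)[OF A] cten_tensor(1)[OF B] l]]) (use e in \<open>simp add: hat_def\<close>)

lemma hat_conj:
  assumes A: "is_tensor r c l A" and l: "0 < l" and k: "k < l"
  shows "hat A ((l - k) mod l) = map_mat cnj (hat A k)"
proof (rule eq_matI)
  have lk: "(l - k) mod l < l" using l by simp
  note c1 = hat_carrier[OF A l lk] and c2 = hat_carrier[OF A l k]
  fix i j assume "i < dim_row (map_mat cnj (hat A k))" "j < dim_col (map_mat cnj (hat A k))"
  then have i: "i < r" and j: "j < c" using c2 by auto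
  show "hat A ((l - k) mod l) $$ (i,j) = map_mat cnj (hat A k) $$ (i,j)"
    using tdft_conj_sym[OF A l k i j] c2 i j by (simp add: hat_def)
qed (use hat_carrier[OF A l k] hat_carrier[OF A l, of "(l - k) mod l"] l in auto)

lemma real_from_slices:
  assumes W: "\<And>k. k < l \<Longrightarrow> W k \<in> carrier_mat r c" and l: "0 < l"
    and sym: "\<And>k. k < l \<Longrightarrow> W ((l - k) mod l) = map_mat cnj (W k)"
  shows "\<exists>A. is_tensor r c l A \<and> (\<forall>k<l. hat A k = W k)"
proof -
  define Z where "Z = map W [0..<l]"
  have Z: "is_tensor r c l Z" using W by (simp add: Z_def is_tensor_def)
  have Zs: "Z ! ((l - k) mod l) $$ (i,j) = cnj (Z ! k $$ (i,j))" if "k < l" "i < r" "j < c" for k i j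
  proof -
    have "(l - k) mod l < l" using l by simp
    then show ?thesis using sym[OF that(1)] W[OF that(1)] that by (simp add: Z_def)
  qed
  define A where "A = rten (tidft Z)"
  have TZ: "is_tensor r c l (tidft Z)" by (rule tidft_tensor(1)[OF Z l])
  have re: "cnj (tidft Z ! k $$ (i,j)) = tidft Z ! k $$ (i,j)" if "k < l" "i < r" "j < c" for k i j
    by (rule tidft_real[OF Z l Zs that])
  have cA: "cten A = tidft Z" unfolding A_def by (rule cten_rten[OF TZ re])
  have "is_tensor r c l A" unfolding A_def by (rule rten_tensor(1)[OF TZ])
  moreover have "\<forall>k<l. hat A k = W k"
    using tdft_tidft[OF Z l] by (simp add: hat_def cA Z_def)
  ultimately show ?thesis by blast
qed



definition gspos :: "nat \<Rightarrow> nat \<Rightarrow> complex mat \<Rightarrow> bool" where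
  "gspos n p M \<longleftrightarrow> (\<forall>m<p. vnorm n (gsw n (ent M) m) > 0)"

lemma map_mat_cnj_mult:
  fixes A B :: "complex mat"
  assumes A: "A \<in> carrier_mat r s" and B: "B \<in> carrier_mat s c"
  shows "map_mat cnj (A * B) = map_mat cnj A * map_mat cnj B"
  by (rule eq_matI) (use A B in \<open>auto simp: scalar_prod_def cnj_sum\<close>)

lemma map_mat_cnj_one: "map_mat cnj (1\<^sub>m n :: complex mat) = 1\<^sub>m n"
  by (rule eq_matI) auto

lemma inverse_unique:
  fixes W Y1 Y2 :: "complex mat"
  assumes W: "W \<in> carrier_mat p p" and Y1: "Y1 \<in> carrier_mat p p" and Y2: "Y2 \<in> carrier_mat p p"
    and WY: "W * Y1 = 1\<^sub>m p" and YW: "Y2 * W = 1\<^sub>m p"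
  shows "Y1 = Y2"
proof -
  have "Y2 = Y2 * (W * Y1)" using WY Y2 by simp
  also have "\<dots> = (Y2 * W) * Y1" using assoc_mult_mat[OF Y2 W Y1] by simp
  also have "\<dots> = Y1" using YW Y1 by simp
  finally show ?thesis by simp
qed

lemma gsQ_cnj:
  assumes M: "M \<in> carrier_mat n p"
  shows "gsQ n p (ent (map_mat cnj M)) = map_mat cnj (gsQ n p (ent M))"
proof (rule eq_matI)
  fix i m assume "i < dim_row (map_mat cnj (gsQ n p (ent M)))" "m < dim_col (map_mat cnj (gsQ n p (ent M)))"
  then have i: "i < n" and m: "m < p" by auto
  have "gsq n (ent (map_mat cnj M)) m i = gsq n (\<lambda>i j. cnj (ent M i j)) m i"
    using gsq_cong[of n p "ent (map_mat cnj M)" "\<lambda>i j. cnj (ent M i j)" m] M i m by (auto simp: ent_def)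
  also have "\<dots> = cnj (gsq n (ent M) m i)" using gs_cnj by blast
  finally show "gsQ n p (ent (map_mat cnj M)) $$ (i,m) = map_mat cnj (gsQ n p (ent M)) $$ (i,m)"
    using i m by (simp add: gsQ_def)
qed auto

lemma gspos_cnj:
  assumes M: "M \<in> carrier_mat n p" and pos: "gspos n p M"
  shows "gspos n p (map_mat cnj M)"
  unfolding gspos_def
proof (intro allI impI)
  fix m assume m: "m < p"
  have "vnorm n (gsw n (ent (map_mat cnj M)) m) = vnorm n (gsw n (\<lambda>i j. cnj (ent M i j)) m)"
    by (rule vnorm_gsw_cong[of n p, OF _ m]) (use M in \<open>auto simp: ent_def\<close>)
  also have "\<dots> = vnorm n (gsw n (ent M) m)" unfolding vnorm_def using gs_cnj by simp
  finally show "vnorm n (gsw n (ent (map_mat cnj M)) m) > 0" using pos m by (simp add: gspos_def)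
qed

lemma stiefel_hat:
  assumes Q: "Q \<in> Stiefel n p l" and l: "0 < l" and k: "k < l"
  shows "adj (hat Q k) * hat Q k = 1\<^sub>m p"
proof -
  have T: "is_tensor n p l Q" using Q by (simp add: Stiefel_def)
  have "hat (ttrans Q \<star> Q) k = adj (hat Q k) * hat Q k"
    using hat_prod[OF ttrans_tensor(1)[OF T] T l k] hat_trans[OF T l k] by simp
  moreover have "ttrans Q \<star> Q = tid p l" using Q by (simp add: Stiefel_def)
  ultimately show ?thesis using hat_tid[OF l k] by simp
qed

lemma qf_char:
  assumes A: "is_tensor n p l A" and l: "0 < l" and pos: "\<And>k. k < l \<Longrightarrow> gspos n p (hat A k)"
  shows "is_tensor n p l (qf A) \<and> (\<forall>k<l. hat (qf A) k = gsQ n p (ent (hat A k)))"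
proof -
  define W where "W = (\<lambda>k. gsQ n p (ent (hat A k)))"
  have posk: "\<And>m. m < p \<Longrightarrow> vnorm n (gsw n (ent (hat A k)) m) > 0" if "k < l" for k
    using pos[OF that] by (simp add: gspos_def)
  have Wc: "W k \<in> carrier_mat n p" for k by (simp add: W_def)
  have Ws: "W ((l - k) mod l) = map_mat cnj (W k)" if k: "k < l" for k
    unfolding W_def hat_conj[OF A l k] by (rule gsQ_cnj[OF hat_carrier[OF A l k]])
  obtain Q where Q: "is_tensor n p l Q" and hQ: "\<forall>k<l. hat Q k = W k"
    using real_from_slices[of l W n p, OF Wc l Ws] by blast
  have QQ: "adj (W k) * W k = 1\<^sub>m p" if "k < l" for k
    unfolding W_def by (rule gs_qr_mat(1)) (rule posk[OF that])
  have St: "Q \<in> Stiefel n p l"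
    unfolding Stiefel_def
  proof (intro CollectI conjI Q)
    show "ttrans Q \<star> Q = tid p l"
    proof (rule hat_inj[OF tprod_tensor_entry(1)[OF ttrans_tensor(1)[OF Q] Q l] tid_tensor(1) l])
      fix k assume k: "k < l"
      show "hat (ttrans Q \<star> Q) k = hat (tid p l) k"
        using hat_prod[OF ttrans_tensor(1)[OF Q] Q l k] hat_trans[OF Q l k] hQ k QQ[OF k] hat_tid[OF l k]
        by simp
    qed
  qed
  define R where "R = ttrans Q \<star> A"
  have R: "is_tensor p p l R" unfolding R_def by (rule tprod_tensor_entry(1)[OF ttrans_tensor(1)[OF Q] A l])
  have hR: "hat R k = gsR n p (ent (hat A k))" if k: "k < l" for k
  proof -
    have "hat R k = adj (W k) * hat A k"
      unfolding R_def using hat_prod[OF ttrans_tensor(1)[OF Q] A l k] hat_trans[OF Q l k] hQ k by simp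
    also have "\<dots> = adj (W k) * mat n p (\<lambda>(i,j). ent (hat A k) i j)"
      using mat_ent[OF hat_carrier[OF A l k]] by simp
    also have "\<dots> = gsR n p (ent (hat A k))" unfolding W_def by (rule gs_qr_mat(3)) (rule posk[OF k])
    finally show ?thesis .
  qed
  have AQR: "A = Q \<star> R"
  proof (rule hat_inj[OF A tprod_tensor_entry(1)[OF Q R l] l])
    fix k assume k: "k < l"
    have "hat (Q \<star> R) k = W k * gsR n p (ent (hat A k))" using hat_prod[OF Q R l k] hQ k hR[OF k] by simp
    also have "\<dots> = mat n p (\<lambda>(i,j). ent (hat A k) i j)" unfolding W_def by (rule gs_qr_mat(2)) (rule posk[OF k])
    also have "\<dots> = hat A k" using mat_ent[OF hat_carrier[OF A l k]] .
    finally show "hat A k = hat (Q \<star> R) k" by simp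
  qed
  have Rprop: "\<forall>k<l. upper_triangular (tdft (cten R) ! k) \<and>
          (\<forall>i<p. Im ((tdft (cten R) ! k) $$ (i, i)) = 0 \<and> Re ((tdft (cten R) ! k) $$ (i, i)) > 0)"
  proof (intro allI impI conjI)
    fix k assume k: "k < l"
    show "upper_triangular (tdft (cten R) ! k)"
      using hR[OF k] gs_qr_mat(4)[OF posk[OF k]] by (simp add: hat_def)
    fix i assume i: "i < p"
    show "Im ((tdft (cten R) ! k) $$ (i, i)) = 0"
      using hR[OF k] gs_qr_mat(5)[OF posk[OF k] i] by (simp add: hat_def)
    show "Re ((tdft (cten R) ! k) $$ (i, i)) > 0"
      using hR[OF k] gs_qr_mat(5)[OF posk[OF k] i] posk[OF k i] by (simp add: hat_def)
  qed
  have uniq: "Q' = Q" if Q': "Q' \<in> Stiefel n p l" and R': "is_tensor p p l R'" and AR': "A = Q' \<star> R'"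
    and Rp: "\<forall>k<l. upper_triangular (tdft (cten R') ! k) \<and>
          (\<forall>i<p. Im ((tdft (cten R') ! k) $$ (i, i)) = 0 \<and> Re ((tdft (cten R') ! k) $$ (i, i)) > 0)"
    for Q' R'
  proof -
    have Q'T: "is_tensor n p l Q'" using Q' by (simp add: Stiefel_def)
    show ?thesis
    proof (rule hat_inj[OF Q'T Q l])
      fix k assume k: "k < l"
      have "hat Q' k = gsQ n p (ent (hat A k))"
      proof (rule gs_unique_mat(2)[OF hat_carrier[OF Q'T l k] hat_carrier[OF R' l k] stiefel_hat[OF Q' l k]])
        show "upper_triangular (hat R' k)" using Rp k by (simp add: hat_def)
        show "\<And>j. j < p \<Longrightarrow> Im (hat R' k $$ (j, j)) = 0 \<and> 0 < Re (hat R' k $$ (j, j))"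
          using Rp k by (simp add: hat_def)
        show "hat Q' k * hat R' k = hat A k" using hat_prod[OF Q'T R' l k] AR' by simp
        show "hat A k \<in> carrier_mat n p" by (rule hat_carrier[OF A l k])
      qed
      then show "hat Q' k = hat Q k" using hQ k by (simp add: W_def)
    qed
  qed
  have dims: "trows A = n" "tcols A = p" "length A = l"
    using tensor_trows[OF A l] tensor_tcols[OF A l] tensor_len[OF A] by auto
  have "qf A = Q"
    unfolding qf_def Let_def dims
  proof (rule the_equality)
    show "Q \<in> Stiefel n p l \<and> (\<exists>R. is_tensor p p l R \<and> A = Q \<star> R \<and>
          (\<forall>k<l. upper_triangular (tdft (cten R) ! k) \<and>
             (\<forall>i<p. Im ((tdft (cten R) ! k) $$ (i, i)) = 0 \<and> Re ((tdft (cten R) ! k) $$ (i, i)) > 0)))"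
      using St R AQR Rprop by blast
    fix Q' assume "Q' \<in> Stiefel n p l \<and> (\<exists>R. is_tensor p p l R \<and> A = Q' \<star> R \<and>
          (\<forall>k<l. upper_triangular (tdft (cten R) ! k) \<and>
             (\<forall>i<p. Im ((tdft (cten R) ! k) $$ (i, i)) = 0 \<and> Re ((tdft (cten R) ! k) $$ (i, i)) > 0)))"
    then show "Q' = Q" using uniq by blast
  qed
  then show ?thesis using Q hQ by (simp add: W_def)
qed

lemma tinv_char:
  assumes W: "is_tensor p p l W" and l: "0 < l"
    and inv: "\<And>k. k < l \<Longrightarrow> \<exists>Y. Y \<in> carrier_mat p p \<and> hat W k * Y = 1\<^sub>m p \<and> Y * hat W k = 1\<^sub>m p"
  shows "is_tensor p p l (tinv W) \<and> (\<forall>k<l. hat W k * hat (tinv W) k = 1\<^sub>m p)"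
proof -
  define Yk where "Yk = (\<lambda>k. SOME Y. Y \<in> carrier_mat p p \<and> hat W k * Y = 1\<^sub>m p \<and> Y * hat W k = 1\<^sub>m p)"
  have Yp: "Yk k \<in> carrier_mat p p \<and> hat W k * Yk k = 1\<^sub>m p \<and> Yk k * hat W k = 1\<^sub>m p" if "k < l" for k
    unfolding Yk_def by (rule someI_ex[OF inv[OF that]])
  have Yc: "Yk k \<in> carrier_mat p p" if "k < l" for k using Yp[OF that] by blast
  have Ys: "Yk ((l - k) mod l) = map_mat cnj (Yk k)" if k: "k < l" for k
  proof -
    have lk: "(l - k) mod l < l" using l by simp
    note Wk = hat_carrier[OF W l k]
    have hc: "hat W ((l - k) mod l) = map_mat cnj (hat W k)" by (rule hat_conj[OF W l k])
    have "map_mat cnj (Yk k) * hat W ((l - k) mod l) = 1\<^sub>m p"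
      unfolding hc using map_mat_cnj_mult[OF Yc[OF k] Wk] Yp[OF k] map_mat_cnj_one by simp
    then show ?thesis
      using inverse_unique[OF hat_carrier[OF W l lk] Yc[OF lk] _ _] Yp[OF lk] Yc[OF k] by simp
  qed
  obtain Z where Z: "is_tensor p p l Z" and hZ: "\<forall>k<l. hat Z k = Yk k"
    using real_from_slices[of l Yk p p, OF _ l Ys] Yc by blast
  have dims: "trows W = p" "length W = l" using tensor_trows[OF W l] tensor_len[OF W] by auto
  have "tinv W = Z"
    unfolding tinv_def dims
  proof (rule the_equality)
    have e1: "W \<star> Z = tid p l"
      by (rule hat_inj[OF tprod_tensor_entry(1)[OF W Z l] tid_tensor(1) l])
         (use hat_prod[OF W Z l] hZ Yp hat_tid[OF l] in simp)
    have e2: "Z \<star> W = tid p l"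
      by (rule hat_inj[OF tprod_tensor_entry(1)[OF Z W l] tid_tensor(1) l])
         (use hat_prod[OF Z W l] hZ Yp hat_tid[OF l] in simp)
    show "is_tensor p p l Z \<and> W \<star> Z = tid p l \<and> Z \<star> W = tid p l" using Z e1 e2 by blast
    fix B assume B: "is_tensor p p l B \<and> W \<star> B = tid p l \<and> B \<star> W = tid p l"
    show "B = Z"
    proof (rule hat_inj[OF _ Z l])
      show "is_tensor p p l B" using B by blast
      fix k assume k: "k < l"
      have BT: "is_tensor p p l B" using B by blast
      have "hat W k * hat B k = 1\<^sub>m p" using hat_prod[OF W BT l k] B hat_tid[OF l k] by simp
      then show "hat B k = hat Z k"
        using inverse_unique[OF hat_carrier[OF W l k] hat_carrier[OF BT l k] Yc[OF k]] B Yp[OF k] hZ k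
        by simp
    qed
  qed
  then show ?thesis using Z hZ Yp by simp
qed



lemma mat_adj_entry:
  assumes A: "A \<in> carrier_mat n p" and B: "B \<in> carrier_mat n q" and a: "a < p" and b: "b < q"
  shows "(adj A * B) $$ (a,b) = (\<Sum>r<n. cnj (A $$ (r,a)) * B $$ (r,b))"
  using mat_mult_entry[OF adj_carrier[OF A] B a b] A a by simp

lemma Pskew_carrier: "Pskew M \<in> carrier_mat (dim_row M) (dim_col M)"
  by (simp add: Pskew_def)

theorem mainTheorem11:
  fixes n p l :: nat and X U V :: "real tensor"
  assumes "0 < l" and "p \<le> n"
    and "X \<in> Stiefel n p l"
    and "U \<in> tangent_St n p l X" and "V \<in> tangent_St n p l X"
  shows "let Q = qf (X \<oplus>\<^sub>t U);
             C = V \<star> tinv (ttrans Q \<star> (X \<oplus>\<^sub>t U));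
             B = ttrans Q \<star> C;
             Bh = tdft (cten B)
         in \<exists>T. tensor_has_deriv_at0 n p l (\<lambda>t. qf (X \<oplus>\<^sub>t (U \<oplus>\<^sub>t tsmult t V))) T \<and>
                cten T = (cten Q \<star> tidft (map Pskew Bh))
                         \<oplus>\<^sub>t cten ((tid n l \<ominus>\<^sub>t (Q \<star> ttrans Q)) \<star> C)"
proof -
  have l: "0 < l" by fact
  have XT: "is_tensor n p l X" using assms(3) by (simp add: Stiefel_def)
  have UT: "is_tensor n p l U" using assms(4) by (simp add: tangent_St_def)
  have VT: "is_tensor n p l V" using assms(5) by (simp add: tangent_St_def)
  have tang: "(ttrans X \<star> U) \<oplus>\<^sub>t (ttrans U \<star> X) = replicate l (0\<^sub>m p p)"
    using assms(4) by (simp add: tangent_St_def)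
  define A0 where "A0 = X \<oplus>\<^sub>t U"
  define At where "At = (\<lambda>t. X \<oplus>\<^sub>t (U \<oplus>\<^sub>t tsmult t V))"
  have A0T: "is_tensor n p l A0" unfolding A0_def by (rule tadd_tensor(1)[OF XT UT])
  have AtT: "is_tensor n p l (At t)" for t
    unfolding At_def by (rule tadd_tensor(1)[OF XT tadd_tensor(1)[OF UT tsmult_tensor(1)[OF VT]]])
  define M0 where "M0 = (\<lambda>k. hat A0 k)"
  define M1 where "M1 = (\<lambda>k. hat V k)"
  have M0c: "M0 k \<in> carrier_mat n p" if "k < l" for k unfolding M0_def by (rule hat_carrier[OF A0T l that])
  have M1c: "M1 k \<in> carrier_mat n p" if "k < l" for k unfolding M1_def by (rule hat_carrier[OF VT l that])
  have hA0: "M0 k = hat X k + hat U k" if k: "k < l" for k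
    unfolding M0_def A0_def by (rule hat_add[OF XT UT l k])
  have hAt: "hat (At t) k = M0 k + of_real t \<cdot>\<^sub>m M1 k" if k: "k < l" for k t
  proof -
    have "hat (At t) k = hat X k + (hat U k + of_real t \<cdot>\<^sub>m hat V k)"
      unfolding At_def using hat_add[OF XT tadd_tensor(1)[OF UT tsmult_tensor(1)[OF VT]] l k]
        hat_add[OF UT tsmult_tensor(1)[OF VT] l k] hat_smult[OF VT l k] by simp
    also have "\<dots> = M0 k + of_real t \<cdot>\<^sub>m M1 k"
      unfolding hA0[OF k] M1_def
      using hat_carrier[OF XT l k] hat_carrier[OF UT l k] hat_carrier[OF VT l k] by simp
    finally show ?thesis .
  qed
  have entAt: "ent (hat (At t) k) i j = apar (ent (M0 k)) (ent (M1 k)) t i j"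
    if k: "k < l" and i: "i < n" and j: "j < p" for k t i j
    using hAt[OF k] M0c[OF k] M1c[OF k] i j by (simp add: ent_def apar_def)
  have pos0: "\<And>m. m < p \<Longrightarrow> vnorm n (gsw n (ent (M0 k)) m) > 0" if k: "k < l" for k
  proof -
    note Xc = hat_carrier[OF XT l k] and Uc = hat_carrier[OF UT l k]
    have kk: "(\<Sum>r<n. cnj (ent (hat X k) r a) * ent (hat X k) r b) = (if a = b then 1 else 0)"
      if "a < p" "b < p" for a b
      using stiefel_hat[OF assms(3) l k] mat_adj_entry[OF Xc Xc that] that by (simp add: ent_def)
    have sk: "(\<Sum>r<n. cnj (ent (hat X k) r a) * ent (hat U k) r b) + (\<Sum>r<n. cnj (ent (hat U k) r a) * ent (hat X k) r b) = 0"
      if ab: "a < p" "b < p" for a b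
    proof -
      have "hat ((ttrans X \<star> U) \<oplus>\<^sub>t (ttrans U \<star> X)) k = adj (hat X k) * hat U k + adj (hat U k) * hat X k"
        using hat_add[OF tprod_tensor_entry(1)[OF ttrans_tensor(1)[OF XT] UT l] tprod_tensor_entry(1)[OF ttrans_tensor(1)[OF UT] XT l] l k]
          hat_prod[OF ttrans_tensor(1)[OF XT] UT l k] hat_prod[OF ttrans_tensor(1)[OF UT] XT l k]
          hat_trans[OF XT l k] hat_trans[OF UT l k] by simp
      then have "adj (hat X k) * hat U k + adj (hat U k) * hat X k = 0\<^sub>m p p"
        using tang hat_zero[OF l k] by simp
      then have "(adj (hat X k) * hat U k + adj (hat U k) * hat X k) $$ (a,b) = 0" using ab by simp
      then show ?thesis using mat_adj_entry[OF Xc Uc ab] mat_adj_entry[OF Uc Xc ab] ab Xc Uc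
        by (simp add: ent_def)
    qed
    have inj: "\<forall>m<p. x m = 0" if h: "\<forall>i<n. (\<Sum>m<p. ent (M0 k) i m * x m) = 0" for x
    proof (rule inj_of_stiefel[where K="ent (hat X k)" and U="ent (hat U k)", OF kk sk])
      show "\<forall>i<n. (\<Sum>m<p. (ent (hat X k) i m + ent (hat U k) i m) * x m) = 0"
        using h hA0[OF k] Xc Uc by (simp add: ent_def)
    qed
    fix m assume mp: "m < p"
    show "vnorm n (gsw n (ent (M0 k)) m) > 0"
      by (rule gs_pos_of_inj[where n=n and p=p and a="ent (M0 k)", OF inj mp])
  qed
  have gspos0: "gspos n p (hat A0 k)" if "k < l" for k
    using pos0[OF that] by (simp add: gspos_def M0_def)
  have evpos: "eventually (\<lambda>t. \<forall>k<l. gspos n p (hat (At t) k)) (nhds 0)"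
  proof -
    have "\<forall>k\<in>{..<l}. eventually (\<lambda>t. gspos n p (hat (At t) k)) (nhds 0)"
    proof
      fix k assume "k \<in> {..<l}"
      then have k: "k < l" by simp
      show "eventually (\<lambda>t. gspos n p (hat (At t) k)) (nhds 0)"
      proof (rule eventually_mono[OF gs_param_ev[where ?a1.0="ent (M1 k)", OF pos0[OF k]]])
        fix t assume P: "\<forall>m<p. vnorm n (gsw n (apar (ent (M0 k)) (ent (M1 k)) t) m) > 0"
        show "gspos n p (hat (At t) k)" unfolding gspos_def
        proof (intro allI impI)
          fix m assume m: "m < p"
          have "vnorm n (gsw n (ent (hat (At t) k)) m) = vnorm n (gsw n (apar (ent (M0 k)) (ent (M1 k)) t) m)"
            by (rule vnorm_gsw_cong[OF _ m]) (rule entAt[OF k])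
          then show "vnorm n (gsw n (ent (hat (At t) k)) m) > 0" using P m by simp
        qed
      qed
    qed
    then have "eventually (\<lambda>t. \<forall>k\<in>{..<l}. gspos n p (hat (At t) k)) (nhds 0)"
      by (rule eventually_ball_finite[rotated]) simp
    then show ?thesis by (rule eventually_mono) auto
  qed
  define Q where "Q = qf A0"
  have QT: "is_tensor n p l Q" and hQ: "\<And>k. k < l \<Longrightarrow> hat Q k = gsQ n p (ent (M0 k))"
    using qf_char[OF A0T l gspos0] by (auto simp: Q_def M0_def)
  define W where "W = ttrans Q \<star> A0"
  have WT: "is_tensor p p l W" unfolding W_def by (rule tprod_tensor_entry(1)[OF ttrans_tensor(1)[OF QT] A0T l])
  have hW: "hat W k = gsR n p (ent (M0 k))" if k: "k < l" for k
  proof -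
    have "hat W k = adj (gsQ n p (ent (M0 k))) * M0 k"
      unfolding W_def M0_def using hat_prod[OF ttrans_tensor(1)[OF QT] A0T l k] hat_trans[OF QT l k] hQ[OF k]
      by (simp add: M0_def)
    also have "\<dots> = adj (gsQ n p (ent (M0 k))) * mat n p (\<lambda>(i,j). ent (M0 k) i j)"
      using mat_ent[OF M0c[OF k]] by simp
    also have "\<dots> = gsR n p (ent (M0 k))" by (rule gs_qr_mat(3)) (rule pos0[OF k])
    finally show ?thesis .
  qed
  have Winv: "\<exists>Y. Y \<in> carrier_mat p p \<and> hat W k * Y = 1\<^sub>m p \<and> Y * hat W k = 1\<^sub>m p" if k: "k < l" for k
  proof -
    have "upper_triangular (gsR n p (ent (M0 k)))" by (rule gs_qr_mat(4)) (rule pos0[OF k])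
    moreover have "gsR n p (ent (M0 k)) $$ (i,i) \<noteq> 0" if "i < p" for i
      using gs_qr_mat(5)[OF pos0[OF k] that] pos0[OF k that] by simp
    ultimately show ?thesis using upper_invertible[of "gsR n p (ent (M0 k))" p] hW[OF k] by simp
  qed
  define Y where "Y = tinv W"
  have YT: "is_tensor p p l Y" and WY: "\<And>k. k < l \<Longrightarrow> hat W k * hat Y k = 1\<^sub>m p"
    using tinv_char[OF WT l Winv] by (auto simp: Y_def)
  define C where "C = V \<star> Y"
  have CT: "is_tensor n p l C" unfolding C_def by (rule tprod_tensor_entry(1)[OF VT YT l])
  have hC: "hat C k = M1 k * hat Y k" if k: "k < l" for k
    unfolding C_def M1_def by (rule hat_prod[OF VT YT l k])
  define B where "B = ttrans Q \<star> C"
  have BT: "is_tensor p p l B" unfolding B_def by (rule tprod_tensor_entry(1)[OF ttrans_tensor(1)[OF QT] CT l])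
  have hB: "hat B k = adj (hat Q k) * hat C k" if k: "k < l" for k
    unfolding B_def using hat_prod[OF ttrans_tensor(1)[OF QT] CT l k] hat_trans[OF QT l k] by simp
  define Qk where "Qk = (\<lambda>k. gsQ n p (ent (M0 k)))"
  define Dk where "Dk = (\<lambda>k. Qk k * Pskew (adj (Qk k) * (M1 k * hat Y k)) + (1\<^sub>m n - Qk k * adj (Qk k)) * (M1 k * hat Y k))"
  have Dkc: "Dk k \<in> carrier_mat n p" if k: "k < l" for k
  proof -
    have "Pskew (adj (Qk k) * (M1 k * hat Y k)) \<in> carrier_mat p p"
      using M1c[OF k] hat_carrier[OF YT l k] by (simp add: Pskew_def Qk_def)
    then show ?thesis unfolding Dk_def using M1c[OF k] hat_carrier[OF YT l k]
      by (auto simp: Qk_def intro!: add_carrier_mat mult_carrier_mat minus_carrier_mat)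
  qed
  have sd: "((\<lambda>t. gsq n (apar (ent (M0 k)) (ent (M1 k)) t) m i) has_vector_derivative Dk k $$ (i,m)) (at 0)"
    if k: "k < l" and i: "i < n" and m: "m < p" for k i m
  proof -
    have RY: "(adj (gsQ n p (ent (M0 k))) * M0 k) * hat Y k = 1\<^sub>m p"
    proof -
      have "adj (gsQ n p (ent (M0 k))) * M0 k = hat W k"
        unfolding W_def using hat_prod[OF ttrans_tensor(1)[OF QT] A0T l k] hat_trans[OF QT l k] hQ[OF k]
        by (simp add: M0_def)
      then show ?thesis using WY[OF k] by simp
    qed
    show ?thesis unfolding Dk_def Qk_def
      by (rule slice_deriv[OF M0c[OF k] M1c[OF k] pos0[OF k] hat_carrier[OF YT l k] RY i m])
  qed
  define DL where "DL = map Dk [0..<l]"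
  have DLT: "is_tensor n p l DL" using Dkc by (simp add: DL_def is_tensor_def)
  define Dt where "Dt = tidft DL"
  have DtT: "is_tensor n p l Dt" unfolding Dt_def by (rule tidft_tensor(1)[OF DLT l])
  have entry: "((\<lambda>t. of_real (qf (At t) ! m $$ (i,j)) :: complex) has_vector_derivative Dt ! m $$ (i,j)) (at 0)
      \<and> Im (Dt ! m $$ (i,j)) = 0"
    if m: "m < l" and i: "i < n" and j: "j < p" for m i j
  proof -
    define G where "G = (\<lambda>t. (1 / of_nat l) * (\<Sum>k<l. inverse (dft_omega l) ^ (k*m) *
        gsq n (apar (ent (M0 k)) (ent (M1 k)) t) j i))"
    have Dte: "Dt ! m $$ (i,j) = (1 / of_nat l) * (\<Sum>k<l. inverse (dft_omega l) ^ (k*m) * Dk k $$ (i,j))"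
      unfolding Dt_def using tidft_tensor(2)[OF DLT l m i j] by (simp add: DL_def)
    have dG: "(G has_vector_derivative Dt ! m $$ (i,j)) (at 0)"
      unfolding G_def Dte
      by (intro has_vector_derivative_mult_right has_vector_derivative_sum sd i j) auto
    have evG: "eventually (\<lambda>t. G t = of_real (qf (At t) ! m $$ (i,j))) (nhds 0)"
    proof (rule eventually_mono[OF evpos])
      fix t assume P: "\<forall>k<l. gspos n p (hat (At t) k)"
      have qc: "is_tensor n p l (qf (At t))" and hq: "\<And>k. k < l \<Longrightarrow> hat (qf (At t)) k = gsQ n p (ent (hat (At t) k))"
        using qf_char[OF AtT l] P by auto
      have "of_real (qf (At t) ! m $$ (i,j)) = cten (qf (At t)) ! m $$ (i,j)"
        using cten_tensor(2)[OF qc m i j] by simp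
      also have "\<dots> = tidft (tdft (cten (qf (At t)))) ! m $$ (i,j)"
        using tidft_tdft[OF cten_tensor(1)[OF qc] l] by simp
      also have "\<dots> = (1 / of_nat l) * (\<Sum>k<l. inverse (dft_omega l) ^ (k*m) * hat (qf (At t)) k $$ (i,j))"
        using tidft_tensor(2)[OF tdft_tensor(1)[OF cten_tensor(1)[OF qc] l] l m i j] by (simp add: hat_def)
      also have "\<dots> = G t"
      proof -
        have eqk: "hat (qf (At t)) k $$ (i,j) = gsq n (apar (ent (M0 k)) (ent (M1 k)) t) j i" if k: "k < l" for k
        proof -
          have "hat (qf (At t)) k $$ (i,j) = gsq n (ent (hat (At t) k)) j i"
            using hq[OF k] i j by (simp add: gsQ_def)
          also have "\<dots> = gsq n (apar (ent (M0 k)) (ent (M1 k)) t) j i"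
            using gsq_cong[of n p "ent (hat (At t) k)" "apar (ent (M0 k)) (ent (M1 k)) t" j] entAt[OF k] i j
            by auto
          finally show ?thesis .
        qed
        show ?thesis unfolding G_def using eqk by simp
      qed
      finally show "G t = of_real (qf (At t) ! m $$ (i,j))" by simp
    qed
    have d: "((\<lambda>t. of_real (qf (At t) ! m $$ (i,j)) :: complex) has_vector_derivative Dt ! m $$ (i,j)) (at 0)"
      by (rule vd_ev[OF evG dG])
    have "Im (Dt ! m $$ (i,j)) = 0"
      by (rule vd_ev_Im0[OF _ d]) simp
    then show ?thesis using d by simp
  qed
  define T where "T = rten Dt"
  have TT: "is_tensor n p l T" unfolding T_def by (rule rten_tensor(1)[OF DtT])
  have cT: "cten T = Dt"
    unfolding T_def
    by (rule cten_rten[OF DtT]) (use entry in \<open>simp add: complex_eq_iff\<close>)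
  have deriv: "tensor_has_deriv_at0 n p l (\<lambda>t. qf (X \<oplus>\<^sub>t (U \<oplus>\<^sub>t tsmult t V))) T"
    unfolding tensor_has_deriv_at0_def
  proof (intro conjI allI impI)
    show "is_tensor n p l T" by (rule TT)
    show "\<forall>\<^sub>F t in nhds 0. is_tensor n p l (qf (X \<oplus>\<^sub>t (U \<oplus>\<^sub>t tsmult t V)))"
      by (rule eventually_mono[OF evpos]) (use qf_char[OF AtT l] in \<open>auto simp: At_def\<close>)
    fix k i j assume k: "k < l" and i: "i < n" and j: "j < p"
    have "((\<lambda>t. Re (of_real (qf (At t) ! k $$ (i,j)) :: complex)) has_field_derivative Re (Dt ! k $$ (i,j))) (at 0)"
      by (rule has_field_derivative_Re) (use entry[OF k i j] in blast)
    then show "((\<lambda>t. qf (X \<oplus>\<^sub>t (U \<oplus>\<^sub>t tsmult t V)) ! k $$ (i, j)) has_real_derivative T ! k $$ (i, j)) (at 0)"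
      using rten_tensor(2)[OF DtT k i j] by (simp add: At_def T_def)
  qed
  define P where "P = tidft (map Pskew (tdft (cten B)))"
  have PL: "is_tensor p p l (map Pskew (tdft (cten B)))"
  proof -
    have "tdft (cten B) ! k \<in> carrier_mat p p" if "k < l" for k
      using hat_carrier[OF BT l that] by (simp add: hat_def)
    then have "Pskew (tdft (cten B) ! k) \<in> carrier_mat p p" if "k < l" for k
    proof -
      have c: "tdft (cten B) ! k \<in> carrier_mat p p" by (rule \<open>\<And>k. k < l \<Longrightarrow> tdft (cten B) ! k \<in> carrier_mat p p\<close>[OF that])
      then have "dim_row (tdft (cten B) ! k) = p" "dim_col (tdft (cten B) ! k) = p" by auto
      then show ?thesis using Pskew_carrier[of "tdft (cten B) ! k"] by simp
    qed
    then show ?thesis using tensor_len[OF tdft_tensor(1)[OF cten_tensor(1)[OF BT] l]]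
      unfolding is_tensor_def by simp
  qed
  have PT: "is_tensor p p l P" unfolding P_def by (rule tidft_tensor(1)[OF PL l])
  define Z where "Z = (tid n l \<ominus>\<^sub>t (Q \<star> ttrans Q)) \<star> C"
  have IQT: "is_tensor n n l (tid n l \<ominus>\<^sub>t (Q \<star> ttrans Q))"
    by (rule tminus_tensor(1)[OF tid_tensor(1) tprod_tensor_entry(1)[OF QT ttrans_tensor(1)[OF QT] l]])
  have ZT: "is_tensor n p l Z" unfolding Z_def by (rule tprod_tensor_entry(1)[OF IQT CT l])
  have RT: "is_tensor n p l ((cten Q \<star> P) \<oplus>\<^sub>t cten Z)"
    by (rule tadd_tensor(1)[OF tprod_tensor_entry(1)[OF cten_tensor(1)[OF QT] PT l] cten_tensor(1)[OF ZT]])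
  have final: "cten T = (cten Q \<star> P) \<oplus>\<^sub>t cten Z"
  proof (rule ctdft_inj[OF cten_tensor(1)[OF TT] RT l])
    fix k assume k: "k < l"
    have lhs: "tdft (cten T) ! k = Dk k"
      unfolding cT Dt_def using tdft_tidft[OF DLT l] k by (simp add: DL_def)
    have "tdft ((cten Q \<star> P) \<oplus>\<^sub>t cten Z) ! k = tdft (cten Q \<star> P) ! k + hat Z k"
      unfolding hat_def
      by (rule tdft_tadd[OF tprod_tensor_entry(1)[OF cten_tensor(1)[OF QT] PT l] cten_tensor(1)[OF ZT] l k])
    also have "tdft (cten Q \<star> P) ! k = hat Q k * Pskew (hat B k)"
      using tdft_tprod[OF cten_tensor(1)[OF QT] PT l k] tdft_tidft[OF PL l] k
        tensor_len[OF tdft_tensor(1)[OF cten_tensor(1)[OF BT] l]]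
      by (simp add: P_def hat_def)
    also have "hat Z k = (1\<^sub>m n - hat Q k * adj (hat Q k)) * hat C k"
      unfolding Z_def
      using hat_prod[OF IQT CT l k] hat_minus[OF tid_tensor(1) tprod_tensor_entry(1)[OF QT ttrans_tensor(1)[OF QT] l] l k]
        hat_tid[OF l k] hat_prod[OF QT ttrans_tensor(1)[OF QT] l k] hat_trans[OF QT l k]
      by simp
    finally show "tdft (cten T) ! k = tdft ((cten Q \<star> P) \<oplus>\<^sub>t cten Z) ! k"
      unfolding lhs Dk_def Qk_def using hB[OF k] hC[OF k] hQ[OF k] by simp
  qed
  have "\<exists>T. tensor_has_deriv_at0 n p l (\<lambda>t. qf (X \<oplus>\<^sub>t (U \<oplus>\<^sub>t tsmult t V))) T \<and>
                cten T = (cten Q \<star> tidft (map Pskew (tdft (cten B))))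
                         \<oplus>\<^sub>t cten ((tid n l \<ominus>\<^sub>t (Q \<star> ttrans Q)) \<star> C)"
    using deriv final unfolding P_def Z_def by blast
  then show ?thesis unfolding Let_def B_def C_def Y_def W_def Q_def A0_def .
qed


end
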